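(* Let $\mathsf P=(\mathsf G,\mathsf M)$ be a network coding problem, let $\mathsf P^\dagger$ be the two-layer incremental multicast problem constructed from it, and let $(\lambda,\omega)$ be a rate-capacity tuple for $\mathsf P$. Then: (1) if $T^\dagger(\lambda,\omega)\in\mathsf{CL}\big(\mathrm{proj}_{\mathsf P^\dagger}[\bar\Gamma^*(\mathsf P^\dagger)\cap\mathcal C_I(\mathsf P^\dagger)\cap\mathcal C_T(\mathsf P^\dagger)\cap\mathcal C_D(\mathsf P^\dagger)]\big)$, then $(\lambda,\omega)\in\mathsf{CL}\big(\mathrm{proj}_{\mathsf P}[\bar\Gamma^*(\mathsf P)\cap\mathcal C_I(\mathsf P)\cap\mathcal C_T(\mathsf P)\cap\mathcal C_D(\mathsf P)]\big)$; (2) if $(\lambda,\omega)$ is $0$-achievable with respect to $\mathsf P$, then $T^\dagger(\lambda,\omega)$ is $0$-achievable with respect to $\mathsf P^\dagger$.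
   Context: A network is $\mathsf G=(\mathcal V,\mathcal E)$, $\mathcal V$ a finite set of nodes, $\mathcal E$ a finite set of hyperedges, each $e$ with tail $\mathrm{tail}(e)\in\mathcal V$ and head $\mathrm{head}(e)\subseteq\mathcal V$, without directed cycles. A connection constraint $\mathsf M=(\mathcal S,O,D)$: finite source index set $\mathcal S$, $O:\mathcal S\to2^{\mathcal V}$ (where source $s$ is available), $D:\mathcal S\to2^{\mathcal V}$ (sinks of $s$). A network coding problem is $(\mathsf G,\mathsf M)$. Sources are imaginary edges with $\mathrm{head}(s)=O(s)$; $\mathrm{in}(e)=\{f\in\mathcal S\cup\mathcal E:\mathrm{tail}(e)\in\mathrm{head}(f)\}$, $\mathrm{in}(u)=\{f\in\mathcal S\cup\mathcal E:u\in\mathrm{head}(f)\}$. $\mathrm{SP}(X)$ is the support of $X$. A network code is a family of discrete random variables $\{Y_f:f\in\mathcal S\cup\mathcal E\}$ with finite supports, each $Y_s$ uniform on its support, the $Y_s$ mutually independent, and $H(Y_e\mid Y_f,f\in\mathrm{in}(e))=0$ for all $e$. A rate-capacity tuple is $(\lambda,\omega)$, $\lambda:\mathcal S\to\mathbb R_{\ge0}$, $\omega:\mathcal E\to\mathbb R_{\ge0}$; it is $0$-achievable if there are network codes $\{Y^n_f\}$ and $c_n>0$ with $\lim_nc_n\log|\mathrm{SP}(Y^n_s)|\ge\lambda(s)$, $\lim_nc_n\log|\mathrm{SP}(Y^n_e)|\le\omega(e)$, and $H(Y^n_s\mid Y^n_f,f\in\mathrm{in}(u))=0$ for all $n$, $s$,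 $u\in D(s)$. Rank functions: $\mathcal H[\mathcal N]$ is the set of real functions on subsets of a finite set $\mathcal N$; $g(\alpha\mid\beta)=g(\alpha\cup\beta)-g(\beta)$. $h$ is entropic if it is the joint-entropy function of some discrete random variables indexed by $\mathcal N$, weakly entropic if $ch$ is entropic for some $c>0$, almost entropic if a limit of weakly entropic functions. For a problem with sources $\mathcal S$ and links $\mathcal E$: $\bar\Gamma^*(\cdot)$ is the set of almost entropic functions in $\mathcal H[\mathcal S\cup\mathcal E]$; $\mathcal C_I=\{h:h(\mathcal S)=\sum_sh(s)\}$, $\mathcal C_T=\{h:h(e\mid\mathrm{in}(e))=0\ \forall e\}$, $\mathcal C_D=\{h:h(s\mid\mathrm{in}(u))=0\ \forall s,u\in D(s)\}$; $\mathrm{proj}[h]=(h(s),s\in\mathcal S;h(e),e\in\mathcal E)$ applied elementwise to sets; $\mathsf{CL}(\mathcal R)$ is the set of tuples $(\lambda,\omega)$ for which there exist $(\lambda^n,\omega^n)\in\mathcal R$ and $c_n>0$ with $\lim_nc_n\omega^n(e)\le\omega(e)$ and $\lim_nc_n\lambda^n(s)\ge\lambda(s)$ for all $e,s$. Construction of $\mathsf P^\dagger=(\mathsf G^\dagger,\mathsf M^\dagger)$ from $\mathsf P=((\mathcal V,\mathcal E),(\mathcal S,O,D))$: $\mathcal V^\dagger=\mathcal V\cup\{\gamma_s,\tau_{s,u}:s\in\mathcal S,u\in D(s)\}\cup\{\psi,\phi,\eta,\eta^*\}$ (all new nodes), $\mathcal E^\dagger=\mathcal E\cup\{a_s,b_s,c_s:s\in\mathcal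 S\}\cup\{d_{s,u}:s\in\mathcal S,u\in D(s)\}$, where the links of $\mathcal E$ keep their tails and heads and, for $s\in\mathcal S$, $u\in D(s)$: $\mathrm{tail}(a_s)=\phi$, $\mathrm{head}(a_s)=O(s)\cup\{\gamma_s,\eta^*\}$; $\mathrm{tail}(b_s)=\phi$, $\mathrm{head}(b_s)=\{\gamma_s,\eta,\psi\}\cup\bigcup_{j\ne s}\{\tau_{j,v}:v\in D(j)\}$; $\mathrm{tail}(c_s)=\gamma_s$, $\mathrm{head}(c_s)=\{\eta,\eta^*\}\cup\{\tau_{s,v}:v\in D(s)\}$; $\mathrm{tail}(d_{s,u})=u$, $\mathrm{head}(d_{s,u})=\{\tau_{s,u}\}$. $\mathsf M^\dagger=(\{1',2'\},O^\dagger,D^\dagger)$ with $O^\dagger(1')=O^\dagger(2')=\{\phi\}$, $D^\dagger(1')=\{\tau_{s,u}:s\in\mathcal S,u\in D(s)\}\cup\{\eta,\eta^*,\psi\}$, $D^\dagger(2')=\{\eta,\eta^*\}$. (The original sources of $\mathsf P$ are not sources of $\mathsf P^\dagger$.) For a tuple $(\lambda,\omega)$ for $\mathsf P$, $T^\dagger(\lambda,\omega)=(\lambda^\dagger,\omega^\dagger)$ is the tuple for $\mathsf P^\dagger$ with $\omega^\dagger(e)=\omega(e)$ for $e\in\mathcal E$, $\omega^\dagger(a_s)=\omega^\dagger(b_s)=\omega^\dagger(c_s)=\lambda(s)$, $\omega^\dagger(d_{s,u})=\lambda(s)$, and $\lambda^\dagger(1')=\lambda^\dagger(2')=\sum_{s\in\mathcal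 S}\lambda(s)$. *)

theory Defs
  imports "HOL-Probability.Probability"
begin

text \<open>A network coding problem (G,M): nodes, links (hyperedges with tail and head),
  source index set, O (where source s is available), D (sinks of s).\<close>

record ('v, 'e, 's) problem =
  nodes :: "'v set"
  links :: "'e set"
  ltail :: "'e \<Rightarrow> 'v"
  lhead :: "'e \<Rightarrow> 'v set"
  srcs  :: "'s set"
  orig  :: "'s \<Rightarrow> 'v set"
  dest  :: "'s \<Rightarrow> 'v set"

definition node_rel :: "('v, 'e, 's) problem \<Rightarrow> ('v \<times> 'v) set" where
  "node_rel P = {(ltail P e, w) | e w. e \<in> links P \<and> w \<in> lhead P e}"

definition valid_problem :: "('v, 'e, 's) problem \<Rightarrow> bool" where
  "valid_problem P \<longleftrightarrow>
     finite (nodes P) \<and> finite (links P) \<and> finite (srcs P) \<and>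
     (\<forall>e\<in>links P. ltail P e \<in> nodes P \<and> lhead P e \<subseteq> nodes P) \<and>
     (\<forall>s\<in>srcs P. orig P s \<subseteq> nodes P \<and> dest P s \<subseteq> nodes P) \<and>
     acyclic (node_rel P)"

text \<open>Variables are indexed by sources (Inl) and links (Inr).\<close>

definition idx :: "('v, 'e, 's) problem \<Rightarrow> ('s + 'e) set" where
  "idx P = Inl ` srcs P \<union> Inr ` links P"

definition in_link :: "('v, 'e, 's) problem \<Rightarrow> 'e \<Rightarrow> ('s + 'e) set" where
  "in_link P e = {Inl s | s. s \<in> srcs P \<and> ltail P e \<in> orig P s}
              \<union> {Inr f | f. f \<in> links P \<and> ltail P e \<in> lhead P f}"

definition in_node :: "('v, 'e, 's) problem \<Rightarrow> 'v \<Rightarrow> ('s + 'e) set" where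
  "in_node P u = {Inl s | s. s \<in> srcs P \<and> u \<in> orig P s}
              \<union> {Inr f | f. f \<in> links P \<and> u \<in> lhead P f}"

text \<open>A family of discrete random variables indexed by type 'i is given by its joint
  distribution, a pmf on functions from indices to nat (values relabelled into nat).\<close>

definition ent :: "'a pmf \<Rightarrow> real" where
  "ent q = - (\<Sum>x\<in>set_pmf q. pmf q x * log 2 (pmf q x))"

definition rst :: "'i set \<Rightarrow> ('i \<Rightarrow> nat) \<Rightarrow> ('i \<Rightarrow> nat)" where
  "rst A y = (\<lambda>i. if i \<in> A then y i else 0)"

definition jent :: "('i \<Rightarrow> nat) pmf \<Rightarrow> 'i set \<Rightarrow> real" where
  "jent Q A = ent (map_pmf (rst A) Q)"

definition marg :: "('i \<Rightarrow> nat) pmf \<Rightarrow> 'i \<Rightarrow> nat pmf" where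
  "marg Q i = map_pmf (\<lambda>y. y i) Q"

definition SP :: "('i \<Rightarrow> nat) pmf \<Rightarrow> 'i \<Rightarrow> nat set" where
  "SP Q i = set_pmf (marg Q i)"

definition network_code :: "('v, 'e, 's) problem \<Rightarrow> ('s + 'e \<Rightarrow> nat) pmf \<Rightarrow> bool" where
  "network_code P Q \<longleftrightarrow>
     (\<forall>f\<in>idx P. finite (SP Q f)) \<and>
     (\<forall>s\<in>srcs P. \<forall>x\<in>SP Q (Inl s). pmf (marg Q (Inl s)) x = 1 / real (card (SP Q (Inl s)))) \<and>
     (\<forall>x. pmf (map_pmf (rst (Inl ` srcs P)) Q) (rst (Inl ` srcs P) x)
           = (\<Prod>s\<in>srcs P. pmf (marg Q (Inl s)) (x (Inl s)))) \<and>
     (\<forall>e\<in>links P. jent Q (in_link P e \<union> {Inr e}) - jent Q (in_link P e) = 0)"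

definition rate_capacity_tuple :: "('v, 'e, 's) problem \<Rightarrow> ('s \<Rightarrow> real) \<times> ('e \<Rightarrow> real) \<Rightarrow> bool" where
  "rate_capacity_tuple P t \<longleftrightarrow> (\<forall>s\<in>srcs P. fst t s \<ge> 0) \<and> (\<forall>e\<in>links P. snd t e \<ge> 0)"

definition zero_achievable :: "('v, 'e, 's) problem \<Rightarrow> ('s \<Rightarrow> real) \<times> ('e \<Rightarrow> real) \<Rightarrow> bool" where
  "zero_achievable P t \<longleftrightarrow>
     (\<exists>(Q :: nat \<Rightarrow> ('s + 'e \<Rightarrow> nat) pmf) (c :: nat \<Rightarrow> real).
        (\<forall>n. network_code P (Q n)) \<and> (\<forall>n. c n > 0) \<and>
        (\<forall>s\<in>srcs P. \<exists>L. (\<lambda>n. c n * log 2 (real (card (SP (Q n) (Inl s))))) \<longlonglongrightarrow> L \<and> L \<ge> fst t s) \<and>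
        (\<forall>e\<in>links P. \<exists>L. (\<lambda>n. c n * log 2 (real (card (SP (Q n) (Inr e))))) \<longlonglongrightarrow> L \<and> L \<le> snd t e) \<and>
        (\<forall>n. \<forall>s\<in>srcs P. \<forall>u\<in>dest P s.
            jent (Q n) ({Inl s} \<union> in_node P u) - jent (Q n) (in_node P u) = 0))"

definition entropic_on :: "'i set \<Rightarrow> ('i set \<Rightarrow> real) \<Rightarrow> bool" where
  "entropic_on N h \<longleftrightarrow>
     (\<exists>Q :: ('i \<Rightarrow> nat) pmf. (\<forall>i\<in>N. finite (SP Q i)) \<and> (\<forall>A. A \<subseteq> N \<longrightarrow> h A = jent Q A))"

definition weakly_entropic_on :: "'i set \<Rightarrow> ('i set \<Rightarrow> real) \<Rightarrow> bool" where
  "weakly_entropic_on N h \<longleftrightarrow> (\<exists>c>0. entropic_on N (\<lambda>A. c * h A))"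

definition almost_entropic_on :: "'i set \<Rightarrow> ('i set \<Rightarrow> real) \<Rightarrow> bool" where
  "almost_entropic_on N h \<longleftrightarrow>
     (\<exists>hs :: nat \<Rightarrow> 'i set \<Rightarrow> real. (\<forall>n. weakly_entropic_on N (hs n)) \<and>
        (\<forall>A. A \<subseteq> N \<longrightarrow> (\<lambda>n. hs n A) \<longlonglongrightarrow> h A))"

definition Gamma_bar :: "('v, 'e, 's) problem \<Rightarrow> (('s + 'e) set \<Rightarrow> real) set" where
  "Gamma_bar P = {h. almost_entropic_on (idx P) h}"

definition C_I :: "('v, 'e, 's) problem \<Rightarrow> (('s + 'e) set \<Rightarrow> real) set" where
  "C_I P = {h. h (Inl ` srcs P) = (\<Sum>s\<in>srcs P. h {Inl s})}"

definition C_T :: "('v, 'e, 's) problem \<Rightarrow> (('s + 'e) set \<Rightarrow> real) set" where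
  "C_T P = {h. \<forall>e\<in>links P. h (in_link P e \<union> {Inr e}) - h (in_link P e) = 0}"

definition C_D :: "('v, 'e, 's) problem \<Rightarrow> (('s + 'e) set \<Rightarrow> real) set" where
  "C_D P = {h. \<forall>s\<in>srcs P. \<forall>u\<in>dest P s. h ({Inl s} \<union> in_node P u) - h (in_node P u) = 0}"

definition proj :: "('v, 'e, 's) problem \<Rightarrow> (('s + 'e) set \<Rightarrow> real) \<Rightarrow> ('s \<Rightarrow> real) \<times> ('e \<Rightarrow> real)" where
  "proj P h = ((\<lambda>s. h {Inl s}), (\<lambda>e. h {Inr e}))"

definition CL :: "('v, 'e, 's) problem \<Rightarrow> (('s \<Rightarrow> real) \<times> ('e \<Rightarrow> real)) set
                  \<Rightarrow> (('s \<Rightarrow> real) \<times> ('e \<Rightarrow> real)) set" where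
  "CL P R = {t. \<exists>(ts :: nat \<Rightarrow> ('s \<Rightarrow> real) \<times> ('e \<Rightarrow> real)) (c :: nat \<Rightarrow> real).
       (\<forall>n. ts n \<in> R) \<and> (\<forall>n. c n > 0) \<and>
       (\<forall>e\<in>links P. \<exists>L. (\<lambda>n. c n * snd (ts n) e) \<longlonglongrightarrow> L \<and> L \<le> snd t e) \<and>
       (\<forall>s\<in>srcs P. \<exists>L. (\<lambda>n. c n * fst (ts n) s) \<longlonglongrightarrow> L \<and> L \<ge> fst t s)}"

definition outer_bound :: "('v, 'e, 's) problem \<Rightarrow> (('s \<Rightarrow> real) \<times> ('e \<Rightarrow> real)) set" where
  "outer_bound P = CL P (proj P ` (Gamma_bar P \<inter> C_I P \<inter> C_T P \<inter> C_D P))"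

datatype ('v, 's) dnode = OldN 'v | Gam 's | Tau 's 'v | Psi | Phi | Eta | EtaStar
datatype ('v, 's, 'e) dlink = OldL 'e | La 's | Lb 's | Lc 's | Ld 's 'v
datatype dsrc = Src1 | Src2

fun dtail :: "('v, 'e, 's) problem \<Rightarrow> ('v, 's, 'e) dlink \<Rightarrow> ('v, 's) dnode" where
  "dtail P (OldL e) = OldN (ltail P e)"
| "dtail P (La s) = Phi"
| "dtail P (Lb s) = Phi"
| "dtail P (Lc s) = Gam s"
| "dtail P (Ld s u) = OldN u"

fun dhead :: "('v, 'e, 's) problem \<Rightarrow> ('v, 's, 'e) dlink \<Rightarrow> ('v, 's) dnode set" where
  "dhead P (OldL e) = OldN ` lhead P e"
| "dhead P (La s) = OldN ` orig P s \<union> {Gam s, EtaStar}"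
| "dhead P (Lb s) = {Gam s, Eta, Psi} \<union> {Tau j v | j v. j \<in> srcs P \<and> j \<noteq> s \<and> v \<in> dest P j}"
| "dhead P (Lc s) = {Eta, EtaStar} \<union> {Tau s v | v. v \<in> dest P s}"
| "dhead P (Ld s u) = {Tau s u}"

definition Pdag :: "('v, 'e, 's) problem \<Rightarrow> (('v, 's) dnode, ('v, 's, 'e) dlink, dsrc) problem" where
  "Pdag P = \<lparr>
     nodes = OldN ` nodes P \<union> Gam ` srcs P \<union> {Tau s u | s u. s \<in> srcs P \<and> u \<in> dest P s}
             \<union> {Psi, Phi, Eta, EtaStar},
     links = OldL ` links P \<union> La ` srcs P \<union> Lb ` srcs P \<union> Lc ` srcs P
             \<union> {Ld s u | s u. s \<in> srcs P \<and> u \<in> dest P s},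
     ltail = dtail P,
     lhead = dhead P,
     srcs = {Src1, Src2},
     orig = (\<lambda>_. {Phi}),
     dest = (\<lambda>x. if x = Src1
                 then {Tau s u | s u. s \<in> srcs P \<and> u \<in> dest P s} \<union> {Eta, EtaStar, Psi}
                 else {Eta, EtaStar}) \<rparr>"

fun Tdag_cap :: "('s \<Rightarrow> real) \<Rightarrow> ('e \<Rightarrow> real) \<Rightarrow> ('v, 's, 'e) dlink \<Rightarrow> real" where
  "Tdag_cap l w (OldL e) = w e"
| "Tdag_cap l w (La s) = l s"
| "Tdag_cap l w (Lb s) = l s"
| "Tdag_cap l w (Lc s) = l s"
| "Tdag_cap l w (Ld s u) = l s"

definition Tdag :: "('v, 'e, 's) problem \<Rightarrow> ('s \<Rightarrow> real) \<times> ('e \<Rightarrow> real)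
                    \<Rightarrow> (dsrc \<Rightarrow> real) \<times> (('v, 's, 'e) dlink \<Rightarrow> real)" where
  "Tdag P t = ((\<lambda>_. \<Sum>s\<in>srcs P. fst t s), Tdag_cap (fst t) (snd t))"

end

theory Submission
  imports Defs "HOL-Library.Nat_Bijection"
begin

lemma pmf_map_finite_sum:
  assumes "finite (set_pmf q)"
  shows "pmf (map_pmf f q) w = (\<Sum>z\<in>{z\<in>set_pmf q. f z = w}. pmf q z)"
proof -
  have "pmf (map_pmf f q) w = measure q (f -` {w})" by (simp add: pmf_map)
  also have "... = measure q (f -` {w} \<inter> set_pmf q)" by (simp add: measure_Int_set_pmf)
  also have "... = (\<Sum>z\<in>f -` {w} \<inter> set_pmf q. pmf q z)"
    by (rule measure_measure_pmf_finite) (use assms in auto)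
  also have "f -` {w} \<inter> set_pmf q = {z\<in>set_pmf q. f z = w}" by auto
  finally show ?thesis .
qed

lemma pmf_map_ge:
  assumes "finite (set_pmf q)" "z \<in> set_pmf q"
  shows "pmf q z \<le> pmf (map_pmf f q) (f z)"
  by (simp add: pmf_map_inj[symmetric] pmf_map_finite_sum[OF assms(1)])
     (rule member_le_sum, use assms in auto)

lemma ent_map_expand:
  assumes fin: "finite (set_pmf q)"
  shows "ent (map_pmf f q) = - (\<Sum>z\<in>set_pmf q. pmf q z * log 2 (pmf (map_pmf f q) (f z)))"
proof -
  let ?P = "pmf (map_pmf f q)"
  have "ent (map_pmf f q) = - (\<Sum>w\<in>f ` set_pmf q. ?P w * log 2 (?P w))"
    by (simp add: ent_def)
  also have "(\<Sum>w\<in>f ` set_pmf q. ?P w * log 2 (?P w)) = (\<Sum>w\<in>f ` set_pmf q. \<Sum>z\<in>{z\<in>set_pmf q. f z = w}. pmf q z * log 2 (?P (f z)))"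
  proof (intro sum.cong refl)
    fix w assume "w \<in> f ` set_pmf q"
    have "?P w * log 2 (?P w) = (\<Sum>z\<in>{z\<in>set_pmf q. f z = w}. pmf q z * log 2 (?P w))"
      by (simp add: pmf_map_finite_sum[OF fin] sum_distrib_right)
    also have "... = (\<Sum>z\<in>{z\<in>set_pmf q. f z = w}. pmf q z * log 2 (?P (f z)))"
      by (intro sum.cong refl) auto
    finally show "?P w * log 2 (?P w) = ..." .
  qed
  also have "... = (\<Sum>z\<in>set_pmf q. pmf q z * log 2 (?P (f z)))"
    by (rule sum.image_gen[symmetric]) (rule fin)
  finally show ?thesis .
qed

lemma ent_expand:
  assumes fin: "finite (set_pmf q)"
  shows "ent q = - (\<Sum>z\<in>set_pmf q. pmf q z * log 2 (pmf q z))"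
  by (simp add: ent_def)

lemma ent_map_inj:
  assumes "inj_on f (set_pmf q)"
  shows "ent (map_pmf f q) = ent q"
proof -
  have "ent (map_pmf f q) = - (\<Sum>w\<in>f ` set_pmf q. pmf (map_pmf f q) w * log 2 (pmf (map_pmf f q) w))"
    by (simp add: ent_def)
  also have "... = - (\<Sum>z\<in>set_pmf q. pmf (map_pmf f q) (f z) * log 2 (pmf (map_pmf f q) (f z)))"
    by (simp add: sum.reindex[OF assms])
  also have "... = - (\<Sum>z\<in>set_pmf q. pmf q z * log 2 (pmf q z))"
    by (intro arg_cong[where f=uminus] sum.cong refl) (simp add: pmf_map_inj[OF assms])
  finally show ?thesis by (simp add: ent_def)
qed

lemma ent_map_diff:
  assumes fin: "finite (set_pmf q)"
  shows "ent q - ent (map_pmf f q) = (\<Sum>z\<in>set_pmf q. pmf q z * (log 2 (pmf (map_pmf f q) (f z)) - log 2 (pmf q z)))"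
  by (simp add: ent_map_expand[OF fin] ent_expand[OF fin] right_diff_distrib sum_subtractf)

lemma ent_map_le:
  assumes fin: "finite (set_pmf q)"
  shows "ent (map_pmf f q) \<le> ent q"
proof -
  have "0 \<le> (\<Sum>z\<in>set_pmf q. pmf q z * (log 2 (pmf (map_pmf f q) (f z)) - log 2 (pmf q z)))"
  proof (intro sum_nonneg mult_nonneg_nonneg)
    fix z assume z: "z \<in> set_pmf q"
    have "pmf q z > 0" using z by (simp add: set_pmf_iff pmf_positive)
    then show "0 \<le> log 2 (pmf (map_pmf f q) (f z)) - log 2 (pmf q z)"
      using pmf_map_ge[OF fin z, of f] by simp
  qed simp
  then show ?thesis using ent_map_diff[OF fin, of f] by simp
qed

lemma ent_map_eq_inj:
  assumes fin: "finite (set_pmf q)" and eq: "ent (map_pmf f q) = ent q"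
  shows "inj_on f (set_pmf q)"
proof (rule inj_onI, rule ccontr)
  fix z1 z2 assume z1: "z1 \<in> set_pmf q" and z2: "z2 \<in> set_pmf q" and fe: "f z1 = f z2" and ne: "z1 \<noteq> z2"
  have pos: "\<And>z. z \<in> set_pmf q \<Longrightarrow> pmf q z > 0" by (simp add: pmf_positive)
  have "pmf q z1 + pmf q z2 = (\<Sum>z\<in>{z1,z2}. pmf q z)" using ne by simp
  also have "... \<le> (\<Sum>z\<in>{z\<in>set_pmf q. f z = f z1}. pmf q z)"
    by (rule sum_mono2) (use fin z1 z2 fe in auto)
  also have "... = pmf (map_pmf f q) (f z1)" by (simp add: pmf_map_finite_sum[OF fin])
  finally have lt: "pmf q z1 < pmf (map_pmf f q) (f z1)" using pos[OF z2] by simp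
  have "0 < (\<Sum>z\<in>set_pmf q. pmf q z * (log 2 (pmf (map_pmf f q) (f z)) - log 2 (pmf q z)))"
  proof (rule sum_pos2[OF fin z1])
    show "0 < pmf q z1 * (log 2 (pmf (map_pmf f q) (f z1)) - log 2 (pmf q z1))"
      using lt pos[OF z1] by simp
  next
    fix z assume z: "z \<in> set_pmf q"
    show "0 \<le> pmf q z * (log 2 (pmf (map_pmf f q) (f z)) - log 2 (pmf q z))"
      using pmf_map_ge[OF fin z, of f] pos[OF z] by simp
  qed
  then show False using ent_map_diff[OF fin, of f] eq by simp
qed

lemma ent_return: "ent (return_pmf x) = 0"
  by (simp add: ent_def)

lemma gibbs:
  assumes fin: "finite S" and p: "\<And>z. z \<in> S \<Longrightarrow> p z > 0" and r: "\<And>z. z \<in> S \<Longrightarrow> r z > 0"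
    and sp: "sum p S = 1" and sr: "sum r S \<le> 1"
  shows "(\<Sum>z\<in>S. p z * log 2 (r z / p z)) \<le> 0"
proof -
  have "(\<Sum>z\<in>S. p z * log 2 (r z / p z)) \<le> (\<Sum>z\<in>S. (r z - p z) / ln 2)"
  proof (rule sum_mono)
    fix z assume z: "z \<in> S"
    have "ln (r z / p z) \<le> r z / p z - 1" using p[OF z] r[OF z] by (intro ln_le_minus_one) simp
    then have "p z * ln (r z / p z) \<le> p z * (r z / p z - 1)" using p[OF z] by (intro mult_left_mono) auto
    also have "... = r z - p z" using p[OF z] by (simp add: field_simps)
    finally show "p z * log 2 (r z / p z) \<le> (r z - p z) / ln 2"
      by (simp add: log_def divide_right_mono)
  qed
  also have "... = (sum r S - sum p S) / ln 2" by (simp add: sum_divide_distrib[symmetric] sum_subtractf)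
  also have "... \<le> 0" using sp sr by (simp add: divide_nonpos_pos)
  finally show ?thesis .
qed

lemma ent_submod_gen:
  assumes fin: "finite (set_pmf q)"
    and gam1: "\<And>z. z \<in> set_pmf q \<Longrightarrow> \<gamma> z = ga (\<alpha> z)"
    and gam2: "\<And>z. z \<in> set_pmf q \<Longrightarrow> \<gamma> z = gb (\<beta> z)"
    and inj: "inj_on (\<lambda>z. (\<alpha> z, \<beta> z)) (set_pmf q)"
  shows "ent q + ent (map_pmf \<gamma> q) \<le> ent (map_pmf \<alpha> q) + ent (map_pmf \<beta> q)"
proof -
  define S where "S = set_pmf q"
  define p where "p = pmf q"
  define Pa where "Pa = pmf (map_pmf \<alpha> q)"
  define Pb where "Pb = pmf (map_pmf \<beta> q)"
  define Pc where "Pc = pmf (map_pmf \<gamma> q)"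
  have finS: "finite S" using fin by (simp add: S_def)
  have pp: "\<And>z. z \<in> S \<Longrightarrow> p z > 0" by (simp add: S_def p_def pmf_positive)
  have Pa_ge: "\<And>z. z \<in> S \<Longrightarrow> p z \<le> Pa (\<alpha> z)" unfolding S_def p_def Pa_def by (rule pmf_map_ge[OF fin])
  have Pb_ge: "\<And>z. z \<in> S \<Longrightarrow> p z \<le> Pb (\<beta> z)" unfolding S_def p_def Pb_def by (rule pmf_map_ge[OF fin])
  have Pc_ge: "\<And>z. z \<in> S \<Longrightarrow> p z \<le> Pc (\<gamma> z)" unfolding S_def p_def Pc_def by (rule pmf_map_ge[OF fin])
  define r where "r z = Pa (\<alpha> z) * Pb (\<beta> z) / Pc (\<gamma> z)" for z
  have rpos: "\<And>z. z \<in> S \<Longrightarrow> r z > 0"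
    unfolding r_def using Pa_ge Pb_ge Pc_ge pp
    by (metis divide_pos_pos mult_pos_pos order_less_le_trans)
  have sp: "sum p S = 1" unfolding S_def p_def by (rule sum_pmf_eq_1[OF fin]) simp
  have Pc_sum: "Pc c = (\<Sum>z\<in>{z\<in>S. \<gamma> z = c}. p z)" for c
    unfolding Pc_def S_def p_def by (rule pmf_map_finite_sum[OF fin])
  have Pb_sum: "Pb b = (\<Sum>z\<in>{z\<in>S. \<beta> z = b}. p z)" for b
    unfolding Pb_def S_def p_def by (rule pmf_map_finite_sum[OF fin])
  have inner: "(\<Sum>b\<in>{b\<in>\<beta> ` S. gb b = c}. Pb b) = Pc c" for c
  proof -
    define T where "T = {z\<in>S. gb (\<beta> z) = c}"
    have finT: "finite T" using finS by (simp add: T_def)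
    have "Pc c = sum p T" unfolding Pc_sum T_def
      by (intro sum.cong refl) (auto simp: gam2 S_def)
    also have "... = (\<Sum>b\<in>\<beta> ` T. \<Sum>z\<in>{z\<in>T. \<beta> z = b}. p z)" by (rule sum.image_gen[OF finT])
    also have "... = (\<Sum>b\<in>{b\<in>\<beta> ` S. gb b = c}. Pb b)"
    proof (rule sum.cong)
      show "\<beta> ` T = {b \<in> \<beta> ` S. gb b = c}" by (auto simp: T_def)
    next
      fix b assume "b \<in> {b \<in> \<beta> ` S. gb b = c}"
      then show "(\<Sum>z\<in>{z\<in>T. \<beta> z = b}. p z) = Pb b" unfolding Pb_sum
        by (intro sum.cong refl) (auto simp: T_def)
    qed
    finally show ?thesis by simp
  qed
  have sr: "sum r S \<le> 1"
  proof -
    let ?ab = "\<lambda>z. (\<alpha> z, \<beta> z)"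
    let ?F = "\<lambda>(a, b). Pa a * Pb b / Pc (ga a)"
    have injS: "inj_on ?ab S" using inj by (simp add: S_def)
    have "sum ?F (?ab ` S) = sum (?F \<circ> ?ab) S" by (rule sum.reindex[OF injS])
    also have "... = sum r S" by (intro sum.cong refl) (simp add: r_def gam1 S_def)
    finally have "sum r S = sum ?F (?ab ` S)" by simp
    also have "... \<le> sum ?F (SIGMA a:\<alpha> ` S. {b\<in>\<beta> ` S. gb b = ga a})"
    proof (rule sum_mono2)
      show "finite (SIGMA a:\<alpha> ` S. {b\<in>\<beta> ` S. gb b = ga a})" using finS by auto
      show "?ab ` S \<subseteq> (SIGMA a:\<alpha> ` S. {b\<in>\<beta> ` S. gb b = ga a})"
        using gam1 gam2 by (auto simp: S_def)
      show "\<And>x. x \<in> (SIGMA a:\<alpha> ` S. {b\<in>\<beta> ` S. gb b = ga a}) - ?ab ` S \<Longrightarrow> 0 \<le> ?F x"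
        by (auto simp: Pa_def Pb_def Pc_def)
    qed
    also have "... = (\<Sum>a\<in>\<alpha> ` S. \<Sum>b\<in>{b\<in>\<beta> ` S. gb b = ga a}. Pa a * Pb b / Pc (ga a))"
      by (rule sum.Sigma[symmetric]) (use finS in auto)
    also have "... = (\<Sum>a\<in>\<alpha> ` S. Pa a)"
    proof (rule sum.cong[OF refl])
      fix a assume a: "a \<in> \<alpha> ` S"
      then obtain z where z: "z \<in> S" "a = \<alpha> z" by auto
      have "Pc (ga a) > 0" using Pc_ge[OF z(1)] pp[OF z(1)] gam1[of z] z by (auto simp: S_def)
      have "(\<Sum>b\<in>{b\<in>\<beta> ` S. gb b = ga a}. Pa a * Pb b / Pc (ga a))
          = Pa a / Pc (ga a) * (\<Sum>b\<in>{b\<in>\<beta> ` S. gb b = ga a}. Pb b)"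
        by (simp add: sum_distrib_left)
      also have "... = Pa a" using inner[of "ga a"] \<open>Pc (ga a) > 0\<close> by simp
      finally show "(\<Sum>b\<in>{b\<in>\<beta> ` S. gb b = ga a}. Pa a * Pb b / Pc (ga a)) = Pa a" .
    qed
    also have "... = 1" unfolding Pa_def S_def
      by (rule sum_pmf_eq_1) (use fin in auto)
    finally show ?thesis .
  qed
  have g: "(\<Sum>z\<in>S. p z * log 2 (r z / p z)) \<le> 0" by (rule gibbs[OF finS pp rpos sp sr])
  have eq: "(\<Sum>z\<in>S. p z * log 2 (r z / p z)) =
      (\<Sum>z\<in>S. p z * log 2 (Pa (\<alpha> z))) + (\<Sum>z\<in>S. p z * log 2 (Pb (\<beta> z)))
      - (\<Sum>z\<in>S. p z * log 2 (Pc (\<gamma> z))) - (\<Sum>z\<in>S. p z * log 2 (p z))"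
  proof -
    have "(\<Sum>z\<in>S. p z * log 2 (r z / p z)) = (\<Sum>z\<in>S. p z * log 2 (Pa (\<alpha> z)) + p z * log 2 (Pb (\<beta> z))
      - p z * log 2 (Pc (\<gamma> z)) - p z * log 2 (p z))"
    proof (rule sum.cong[OF refl])
      fix z assume z: "z \<in> S"
      have a: "Pa (\<alpha> z) > 0" using Pa_ge[OF z] pp[OF z] by linarith
      have b: "Pb (\<beta> z) > 0" using Pb_ge[OF z] pp[OF z] by linarith
      have c: "Pc (\<gamma> z) > 0" using Pc_ge[OF z] pp[OF z] by linarith
      show "p z * log 2 (r z / p z) = p z * log 2 (Pa (\<alpha> z)) + p z * log 2 (Pb (\<beta> z))
      - p z * log 2 (Pc (\<gamma> z)) - p z * log 2 (p z)"
        using a b c pp[OF z] by (simp add: r_def log_divide log_mult algebra_simps)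
    qed
    then show ?thesis by (simp add: sum.distrib sum_subtractf)
  qed
  have e1: "ent q = - (\<Sum>z\<in>S. p z * log 2 (p z))" by (simp add: ent_def S_def p_def)
  have e2: "ent (map_pmf f q) = - (\<Sum>z\<in>S. p z * log 2 (pmf (map_pmf f q) (f z)))" for f
    by (simp add: ent_map_expand[OF fin] S_def p_def)
  show ?thesis using g eq e1 e2[of \<alpha>] e2[of \<beta>] e2[of \<gamma>]
    by (simp add: Pa_def Pb_def Pc_def)
qed

lemma rst_rst: "A \<subseteq> B \<Longrightarrow> rst A (rst B y) = rst A y"
  by (auto simp: rst_def fun_eq_iff)

lemma map_rst_rst: "A \<subseteq> B \<Longrightarrow> map_pmf (rst A) (map_pmf (rst B) Q) = map_pmf (rst A) Q"
  by (simp add: pmf.map_comp comp_def rst_rst)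

lemma finite_set_map_rst:
  assumes "finite B" "\<And>i. i \<in> B \<Longrightarrow> finite (SP Q i)"
  shows "finite (set_pmf (map_pmf (rst B) Q))"
proof -
  have "set_pmf (map_pmf (rst B) Q) \<subseteq> PiE_dflt B 0 (SP Q)"
    by (auto simp: PiE_dflt_def rst_def SP_def marg_def)
  moreover have "finite (PiE_dflt B 0 (SP Q))" using assms by (intro finite_PiE_dflt) auto
  ultimately show ?thesis by (rule finite_subset)
qed

lemma jent_empty: "jent Q {} = 0"
proof -
  have "rst {} = (\<lambda>y i. 0)" by (auto simp: rst_def fun_eq_iff)
  have "map_pmf (rst {}) Q = return_pmf (\<lambda>i. 0)" unfolding \<open>rst {} = _\<close> by (rule map_pmf_const)
  then show ?thesis by (simp add: jent_def ent_return)
qed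

lemma jent_mono:
  assumes "finite B" "\<And>i. i \<in> B \<Longrightarrow> finite (SP Q i)" "A \<subseteq> B"
  shows "jent Q A \<le> jent Q B"
proof -
  have "jent Q A = ent (map_pmf (rst A) (map_pmf (rst B) Q))"
    by (simp add: jent_def map_rst_rst[OF assms(3)])
  also have "... \<le> ent (map_pmf (rst B) Q)"
    by (rule ent_map_le[OF finite_set_map_rst[OF assms(1,2)]])
  finally show ?thesis by (simp add: jent_def)
qed

lemma jent_submod:
  assumes "finite (A \<union> B)" "\<And>i. i \<in> A \<union> B \<Longrightarrow> finite (SP Q i)"
  shows "jent Q (A \<union> B) + jent Q (A \<inter> B) \<le> jent Q A + jent Q B"
proof -
  define q where "q = map_pmf (rst (A \<union> B)) Q"
  have fin: "finite (set_pmf q)" unfolding q_def by (rule finite_set_map_rst[OF assms])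
  have "ent q + ent (map_pmf (rst (A \<inter> B)) q) \<le> ent (map_pmf (rst A) q) + ent (map_pmf (rst B) q)"
  proof (rule ent_submod_gen[OF fin, where ga = "rst (A \<inter> B)" and gb = "rst (A \<inter> B)"])
    fix z assume "z \<in> set_pmf q"
    show "rst (A \<inter> B) z = rst (A \<inter> B) (rst A z)" "rst (A \<inter> B) z = rst (A \<inter> B) (rst B z)"
      by (auto simp: rst_def fun_eq_iff)
  next
    show "inj_on (\<lambda>z. (rst A z, rst B z)) (set_pmf q)"
    proof (rule inj_onI)
      fix z z' assume z: "z \<in> set_pmf q" and z': "z' \<in> set_pmf q" and e: "(rst A z, rst B z) = (rst A z', rst B z')"
      from z obtain y where "z = rst (A \<union> B) y" by (auto simp: q_def)
      moreover from z' obtain y' where "z' = rst (A \<union> B) y'" by (auto simp: q_def)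
      ultimately show "z = z'" using e by (auto simp: rst_def fun_eq_iff split: if_splits) metis+
    qed
  qed
  moreover have "map_pmf (rst (A \<inter> B)) q = map_pmf (rst (A \<inter> B)) Q"
    unfolding q_def by (rule map_rst_rst) auto
  moreover have "map_pmf (rst A) q = map_pmf (rst A) Q" "map_pmf (rst B) q = map_pmf (rst B) Q"
    unfolding q_def by (rule map_rst_rst; auto)+
  ultimately show ?thesis
    by (simp add: q_def jent_def)
qed

lemma jent_zero_fd:
  assumes "finite (A \<union> B)" "\<And>i. i \<in> A \<union> B \<Longrightarrow> finite (SP Q i)"
    and eq: "jent Q (A \<union> B) = jent Q A"
    and y: "y \<in> set_pmf Q" and y': "y' \<in> set_pmf Q" and e: "rst A y = rst A y'"
  shows "rst B y = rst B y'"
proof -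
  define q where "q = map_pmf (rst (A \<union> B)) Q"
  have fin: "finite (set_pmf q)" unfolding q_def by (rule finite_set_map_rst[OF assms(1,2)])
  have "ent (map_pmf (rst A) q) = ent q" using eq by (simp add: q_def jent_def map_rst_rst)
  then have inj: "inj_on (rst A) (set_pmf q)" by (rule ent_map_eq_inj[OF fin])
  have "rst (A \<union> B) y = rst (A \<union> B) y'"
    by (rule inj_onD[OF inj]) (use y y' e in \<open>auto simp: q_def rst_rst\<close>)
  then show ?thesis by (metis Un_upper2 rst_rst)
qed

lemma jent_fd_zero:
  assumes fd: "\<And>y y'. y \<in> set_pmf Q \<Longrightarrow> y' \<in> set_pmf Q \<Longrightarrow> rst A y = rst A y' \<Longrightarrow> rst B y = rst B y'"
  shows "jent Q (A \<union> B) = jent Q A"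
proof -
  define q where "q = map_pmf (rst (A \<union> B)) Q"
  have inj: "inj_on (rst A) (set_pmf q)"
  proof (rule inj_onI)
    fix z z' assume z: "z \<in> set_pmf q" and z': "z' \<in> set_pmf q" and e: "rst A z = rst A z'"
    from z obtain y where y: "y \<in> set_pmf Q" "z = rst (A \<union> B) y" by (auto simp: q_def)
    from z' obtain y' where y': "y' \<in> set_pmf Q" "z' = rst (A \<union> B) y'" by (auto simp: q_def)
    have "rst A y = rst A y'" using e y y' by (simp add: rst_rst)
    then have "rst B y = rst B y'" by (rule fd[OF y(1) y'(1)])
    with \<open>rst A y = rst A y'\<close> show "z = z'" using y y'
      by (auto simp: rst_def fun_eq_iff) metis+
  qed
  have "ent (map_pmf (rst A) q) = ent q" by (rule ent_map_inj[OF inj])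
  then show ?thesis by (simp add: q_def jent_def map_rst_rst)
qed

definition pm :: "'i set \<Rightarrow> ('i set \<Rightarrow> real) \<Rightarrow> bool" where
  "pm N h \<longleftrightarrow> h {} = 0 \<and> (\<forall>A B. A \<subseteq> B \<and> B \<subseteq> N \<longrightarrow> h A \<le> h B) \<and>
     (\<forall>A B. A \<subseteq> N \<and> B \<subseteq> N \<longrightarrow> h (A \<union> B) + h (A \<inter> B) \<le> h A + h B)"

lemma entropic_pm:
  assumes "finite N" "entropic_on N h" shows "pm N h"
proof -
  obtain Q where Q: "\<forall>i\<in>N. finite (SP Q i)" "\<forall>A. A \<subseteq> N \<longrightarrow> h A = jent Q A"
    using assms(2) by (auto simp: entropic_on_def)
  have fin: "finite B" if "B \<subseteq> N" for B using assms(1) that by (rule finite_subset[rotated])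
  show ?thesis unfolding pm_def
  proof (intro conjI allI impI)
    show "h {} = 0" using Q(2) by (simp add: jent_empty)
  next
    fix A B :: "'a set" assume "A \<subseteq> B \<and> B \<subseteq> N"
    then have "finite B" "A \<subseteq> N" using fin by auto
    moreover have "jent Q A \<le> jent Q B" using \<open>A \<subseteq> B \<and> B \<subseteq> N\<close> Q(1) \<open>finite B\<close>
      by (intro jent_mono) auto
    ultimately show "h A \<le> h B" using Q \<open>A \<subseteq> B \<and> B \<subseteq> N\<close> by auto
  next
    fix A B :: "'a set" assume "A \<subseteq> N \<and> B \<subseteq> N"
    then show "h (A \<union> B) + h (A \<inter> B) \<le> h A + h B"
      using Q jent_submod[of A B Q] fin[of "A \<union> B"] by (auto simp: Int_absorb2 le_infI1)
  qed
qed

lemma pm_scale: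
  assumes "pm N h" "c > 0" shows "pm N (\<lambda>A. c * h A)"
  using assms unfolding pm_def by (auto simp: distrib_left[symmetric])

lemma weakly_pm:
  assumes "finite N" "weakly_entropic_on N h" shows "pm N h"
proof -
  obtain c where c: "c > 0" "entropic_on N (\<lambda>A. c * h A)" using assms(2) by (auto simp: weakly_entropic_on_def)
  have "pm N (\<lambda>A. inverse c * (c * h A))" by (rule pm_scale[OF entropic_pm[OF assms(1) c(2)]]) (use c in simp)
  then show ?thesis using c(1) by (simp add: field_simps)
qed

lemma almost_pm:
  assumes "finite N" "almost_entropic_on N h" shows "pm N h"
proof -
  obtain hs where hs: "\<And>n. weakly_entropic_on N (hs n)" "\<And>A. A \<subseteq> N \<Longrightarrow> (\<lambda>n. hs n A) \<longlonglongrightarrow> h A"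
    using assms(2) by (auto simp: almost_entropic_on_def)
  have pms: "\<And>n. pm N (hs n)" using weakly_pm[OF assms(1) hs(1)] .
  show ?thesis unfolding pm_def
  proof (intro conjI allI impI)
    have "(\<lambda>n. hs n {}) \<longlonglongrightarrow> 0" using pms by (simp add: pm_def)
    then show "h {} = 0" using hs(2)[of "{}"] LIMSEQ_unique by blast
  next
    fix A B :: "'a set" assume ab: "A \<subseteq> B \<and> B \<subseteq> N"
    show "h A \<le> h B"
      by (rule LIMSEQ_le[OF hs(2) hs(2)]) (use ab pms in \<open>auto simp: pm_def\<close>)
  next
    fix A B :: "'a set" assume ab: "A \<subseteq> N \<and> B \<subseteq> N"
    have l: "(\<lambda>n. hs n (A \<union> B) + hs n (A \<inter> B)) \<longlonglongrightarrow> h (A \<union> B) + h (A \<inter> B)"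
      by (intro tendsto_add hs(2)) (use ab in auto)
    have r: "(\<lambda>n. hs n A + hs n B) \<longlonglongrightarrow> h A + h B"
      by (intro tendsto_add hs(2)) (use ab in auto)
    show "h (A \<union> B) + h (A \<inter> B) \<le> h A + h B"
      by (rule LIMSEQ_le[OF l r]) (use ab pms in \<open>auto simp: pm_def\<close>)
  qed
qed

lemma almost_scale:
  assumes "almost_entropic_on N h" "c > 0" shows "almost_entropic_on N (\<lambda>A. c * h A)"
proof -
  obtain hs where hs: "\<And>n. weakly_entropic_on N (hs n)" "\<And>A. A \<subseteq> N \<Longrightarrow> (\<lambda>n. hs n A) \<longlonglongrightarrow> h A"
    using assms(1) by (auto simp: almost_entropic_on_def)
  have "weakly_entropic_on N (\<lambda>A. c * hs n A)" for n
  proof -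
    obtain d where d: "d > 0" "entropic_on N (\<lambda>A. d * hs n A)" using hs(1)[of n] by (auto simp: weakly_entropic_on_def)
    have "entropic_on N (\<lambda>A. (d / c) * (c * hs n A))" using d assms(2) by simp
    then show ?thesis unfolding weakly_entropic_on_def using d assms(2) by (intro exI[of _ "d / c"]) auto
  qed
  moreover have "\<And>A. A \<subseteq> N \<Longrightarrow> (\<lambda>n. c * hs n A) \<longlonglongrightarrow> c * h A" by (intro tendsto_mult_left hs(2))
  ultimately show ?thesis unfolding almost_entropic_on_def by (intro exI[of _ "\<lambda>n A. c * hs n A"]) auto
qed

lemma almost_limit:
  assumes finN: "finite N" and G: "\<And>n. almost_entropic_on N (G n)"
    and lim: "\<And>A. A \<subseteq> N \<Longrightarrow> (\<lambda>n. G n A) \<longlonglongrightarrow> g A"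
  shows "almost_entropic_on N g"
proof -
  have "\<exists>hs. (\<forall>k. weakly_entropic_on N (hs k)) \<and> (\<forall>A. A \<subseteq> N \<longrightarrow> (\<lambda>k. hs k A) \<longlonglongrightarrow> G n A)" for n
    using G[of n] by (simp add: almost_entropic_on_def)
  then obtain hs where hs: "\<And>n k. weakly_entropic_on N (hs n k)"
    "\<And>n A. A \<subseteq> N \<Longrightarrow> (\<lambda>k. hs n k A) \<longlonglongrightarrow> G n A"
    by metis
  have "\<exists>k. \<forall>A\<in>Pow N. \<bar>hs n k A - G n A\<bar> < inverse (real (Suc n))" for n
  proof -
    have "\<forall>A\<in>Pow N. eventually (\<lambda>k. dist (hs n k A) (G n A) < inverse (real (Suc n))) sequentially"
      using hs(2) by (auto intro!: tendstoD)
    then have "eventually (\<lambda>k. \<forall>A\<in>Pow N. dist (hs n k A) (G n A) < inverse (real (Suc n))) sequentially"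
      using finN by (intro eventually_ball_finite) auto
    then obtain k where "\<forall>A\<in>Pow N. dist (hs n k A) (G n A) < inverse (real (Suc n))"
      by (auto simp: eventually_sequentially)
    then show ?thesis by (auto simp: dist_real_def)
  qed
  then obtain k where k: "\<And>n A. A \<in> Pow N \<Longrightarrow> \<bar>hs n (k n) A - G n A\<bar> < inverse (real (Suc n))" by metis
  have "(\<lambda>n. hs n (k n) A) \<longlonglongrightarrow> g A" if A: "A \<subseteq> N" for A
  proof -
    have "(\<lambda>n. hs n (k n) A - G n A) \<longlonglongrightarrow> 0"
    proof (rule Lim_null_comparison)
      show "\<forall>\<^sub>F n in sequentially. norm (hs n (k n) A - G n A) \<le> inverse (real (Suc n))"
        using k[of A] A by (auto intro!: less_imp_le always_eventually)
      show "(\<lambda>n. inverse (real (Suc n))) \<longlonglongrightarrow> 0" by (rule LIMSEQ_inverse_real_of_nat)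
    qed
    then have "(\<lambda>n. (hs n (k n) A - G n A) + G n A) \<longlonglongrightarrow> 0 + g A" by (intro tendsto_add lim A)
    then show ?thesis by simp
  qed
  then show ?thesis unfolding almost_entropic_on_def using hs(1)
    by (intro exI[of _ "\<lambda>n. hs n (k n)"]) auto
qed

lemma jent_relabel:
  assumes "inj \<rho>"
  shows "jent (map_pmf (\<lambda>y. y \<circ> \<rho>) Q) A = jent Q (\<rho> ` A)"
proof -
  have eq: "rst A (y \<circ> \<rho>) = (rst (\<rho> ` A) y) \<circ> \<rho>" for y
    using assms by (auto simp: rst_def fun_eq_iff inj_image_mem_iff)
  have "map_pmf (rst A) (map_pmf (\<lambda>y. y \<circ> \<rho>) Q) = map_pmf (\<lambda>z. z \<circ> \<rho>) (map_pmf (rst (\<rho> ` A)) Q)"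
    by (simp add: pmf.map_comp comp_def eq[unfolded comp_def])
  moreover have "inj_on (\<lambda>z. z \<circ> \<rho>) (set_pmf (map_pmf (rst (\<rho> ` A)) Q))"
  proof (rule inj_onI)
    fix z z' assume z: "z \<in> set_pmf (map_pmf (rst (\<rho> ` A)) Q)" and z': "z' \<in> set_pmf (map_pmf (rst (\<rho> ` A)) Q)"
      and e: "z \<circ> \<rho> = z' \<circ> \<rho>"
    show "z = z'"
    proof
      fix i
      show "z i = z' i"
      proof (cases "i \<in> \<rho> ` A")
        case True
        then obtain a where "i = \<rho> a" by auto
        then show ?thesis using e by (metis comp_apply)
      next
        case False
        then show ?thesis using z z' by (auto simp: rst_def)
      qed
    qed
  qed
  ultimately show ?thesis by (simp add: jent_def ent_map_inj)
qed

lemma SP_relabel: "SP (map_pmf (\<lambda>y. y \<circ> \<rho>) Q) i = SP Q (\<rho> i)"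
  by (simp add: SP_def marg_def pmf.map_comp comp_def)

lemma almost_relabel:
  assumes "inj \<rho>" "almost_entropic_on N' g" "\<rho> ` N \<subseteq> N'"
  shows "almost_entropic_on N (\<lambda>A. g (\<rho> ` A))"
proof -
  obtain hs where hs: "\<And>n. weakly_entropic_on N' (hs n)" "\<And>A. A \<subseteq> N' \<Longrightarrow> (\<lambda>n. hs n A) \<longlonglongrightarrow> g A"
    using assms(2) by (auto simp: almost_entropic_on_def)
  have "weakly_entropic_on N (\<lambda>A. hs n (\<rho> ` A))" for n
  proof -
    obtain c Q where c: "c > 0" "\<forall>i\<in>N'. finite (SP Q i)" "\<forall>A. A \<subseteq> N' \<longrightarrow> c * hs n A = jent Q A"
      using hs(1)[of n] by (auto simp: weakly_entropic_on_def entropic_on_def)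
    have "entropic_on N (\<lambda>A. c * hs n (\<rho> ` A))" unfolding entropic_on_def
    proof (intro exI[of _ "map_pmf (\<lambda>y. y \<circ> \<rho>) Q"] conjI allI impI ballI)
      fix i assume "i \<in> N" then show "finite (SP (map_pmf (\<lambda>y. y \<circ> \<rho>) Q) i)"
        using c assms(3) by (auto simp: SP_relabel)
    next
      fix A assume "A \<subseteq> N"
      then have "\<rho> ` A \<subseteq> N'" using assms(3) by auto
      then show "c * hs n (\<rho> ` A) = jent (map_pmf (\<lambda>y. y \<circ> \<rho>) Q) A"
        using c by (simp add: jent_relabel[OF assms(1)])
    qed
    then show ?thesis unfolding weakly_entropic_on_def using c(1) by auto
  qed
  moreover have "\<And>A. A \<subseteq> N \<Longrightarrow> (\<lambda>n. hs n (\<rho> ` A)) \<longlonglongrightarrow> g (\<rho> ` A)"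
    using assms(3) by (intro hs(2)) auto
  ultimately show ?thesis unfolding almost_entropic_on_def by (intro exI[of _ "\<lambda>n A. hs n (\<rho> ` A)"]) auto
qed

definition det :: "('i set \<Rightarrow> real) \<Rightarrow> 'i set \<Rightarrow> 'i set \<Rightarrow> bool" where
  "det g X Z \<longleftrightarrow> g (X \<union> Z) = g Z"

context
  fixes N :: "'i set" and g :: "'i set \<Rightarrow> real"
  assumes pm: "pm N g"
begin

lemma pm_empty: "g {} = 0" using pm by (simp add: pm_def)
lemma pm_mono: "A \<subseteq> B \<Longrightarrow> B \<subseteq> N \<Longrightarrow> g A \<le> g B" using pm by (simp add: pm_def)
lemma pm_sub: "A \<subseteq> N \<Longrightarrow> B \<subseteq> N \<Longrightarrow> g (A \<union> B) + g (A \<inter> B) \<le> g A + g B" using pm by (simp add: pm_def)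
lemma pm_nonneg: "A \<subseteq> N \<Longrightarrow> 0 \<le> g A" using pm_mono[of "{}" A] pm_empty by simp
lemma pm_subadd: "A \<subseteq> N \<Longrightarrow> B \<subseteq> N \<Longrightarrow> g (A \<union> B) \<le> g A + g B"
proof -
  assume "A \<subseteq> N" "B \<subseteq> N"
  then have "g (A \<union> B) + g (A \<inter> B) \<le> g A + g B" "0 \<le> g (A \<inter> B)" using pm_sub[of A B] pm_nonneg[of "A \<inter> B"] by auto
  then show ?thesis by linarith
qed

lemma pm_subadd_sum:
  assumes "finite I" "\<And>i. i \<in> I \<Longrightarrow> F i \<subseteq> N"
  shows "g (\<Union>i\<in>I. F i) \<le> (\<Sum>i\<in>I. g (F i))"
  using assms
proof (induction I rule: finite_induct)
  case empty then show ?case by (simp add: pm_empty)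
next
  case (insert x I)
  have "g (\<Union>i\<in>insert x I. F i) = g (F x \<union> (\<Union>i\<in>I. F i))" by simp
  also have "... \<le> g (F x) + g (\<Union>i\<in>I. F i)" using insert.prems by (intro pm_subadd) auto
  also have "... \<le> g (F x) + (\<Sum>i\<in>I. g (F i))" using insert by simp
  finally show ?case using insert by simp
qed

lemma pm_subadd_singl:
  assumes "finite W" "W \<subseteq> N" shows "g W \<le> (\<Sum>i\<in>W. g {i})"
  using pm_subadd_sum[of W "\<lambda>i. {i}"] assms by auto

lemma pm_cond_mono:
  assumes "X \<subseteq> N" "Y \<subseteq> Z" "Z \<subseteq> N"
  shows "g (X \<union> Z) - g Z \<le> g (X \<union> Y) - g Y"
proof -
  have "g (X \<union> Y \<union> Z) + g ((X \<union> Y) \<inter> Z) \<le> g (X \<union> Y) + g Z" using assms by (intro pm_sub) auto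
  moreover have "g Y \<le> g ((X \<union> Y) \<inter> Z)" using assms by (intro pm_mono) auto
  moreover have "X \<union> Y \<union> Z = X \<union> Z" using assms by auto
  ultimately show ?thesis by simp
qed

lemma det_iff: "X \<subseteq> N \<Longrightarrow> Z \<subseteq> N \<Longrightarrow> det g X Z \<longleftrightarrow> g (X \<union> Z) \<le> g Z"
  using pm_mono[of Z "X \<union> Z"] by (auto simp: det_def)

lemma det_subset: "X \<subseteq> Z \<Longrightarrow> det g X Z" by (simp add: det_def Un_absorb1)

lemma det_mono_right:
  assumes "det g X Y" "Y \<subseteq> Z" "X \<subseteq> N" "Z \<subseteq> N" shows "det g X Z"
proof -
  have "g (X \<union> Z) \<le> g Z" using pm_cond_mono[of X Y Z] assms by (simp add: det_def)
  then show ?thesis using assms by (simp add: det_iff)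
qed

lemma det_union:
  assumes "det g X1 Z" "det g X2 Z" "X1 \<subseteq> N" "X2 \<subseteq> N" "Z \<subseteq> N"
  shows "det g (X1 \<union> X2) Z"
proof -
  have "g (X2 \<union> (X1 \<union> Z)) - g (X1 \<union> Z) \<le> g (X2 \<union> Z) - g Z" using assms by (intro pm_cond_mono) auto
  moreover have "X2 \<union> (X1 \<union> Z) = (X1 \<union> X2) \<union> Z" by auto
  ultimately have "g ((X1 \<union> X2) \<union> Z) \<le> g Z" using assms(1,2) unfolding det_def by simp
  then show ?thesis using assms by (simp add: det_iff)
qed

lemma det_trans:
  assumes "det g X Y" "det g Y Z" "X \<subseteq> N" "Y \<subseteq> N" "Z \<subseteq> N"
  shows "det g X Z"
proof -
  have "g (X \<union> (Y \<union> Z)) - g (Y \<union> Z) \<le> g (X \<union> Y) - g Y" using assms by (intro pm_cond_mono) auto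
  moreover have "g (X \<union> Z) \<le> g (X \<union> (Y \<union> Z))" using assms by (intro pm_mono) auto
  moreover have "X \<union> (Y \<union> Z) = (X \<union> Y) \<union> Z" by auto
  ultimately have "g (X \<union> Z) \<le> g Z" using assms(1,2) unfolding det_def by simp
  then show ?thesis using assms by (simp add: det_iff)
qed

lemma det_sub:
  assumes "det g X Z" "X' \<subseteq> X" "X \<subseteq> N" "Z \<subseteq> N" shows "det g X' Z"
proof -
  have "g (X' \<union> Z) \<le> g (X \<union> Z)" using assms by (intro pm_mono) auto
  then have "g (X' \<union> Z) \<le> g Z" using assms(1) unfolding det_def by simp
  moreover have "X' \<subseteq> N" using assms by auto
  ultimately show ?thesis using assms by (simp add: det_iff)
qed

lemma det_finite_union:
  assumes "finite I" "\<And>i. i \<in> I \<Longrightarrow> det g (F i) Z" "\<And>i. i \<in> I \<Longrightarrow> F i \<subseteq> N" "Z \<subseteq> N"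
  shows "det g (\<Union>i\<in>I. F i) Z"
  using assms
proof (induction I rule: finite_induct)
  case empty then show ?case by (simp add: det_def)
next
  case (insert x I)
  then show ?case using det_union[of "F x" Z "\<Union>i\<in>I. F i"] by auto
qed

lemma det_singletons:
  assumes "finite W" "\<And>i. i \<in> W \<Longrightarrow> det g {i} Z" "W \<subseteq> N" "Z \<subseteq> N"
  shows "det g W Z"
  using det_finite_union[of W "\<lambda>i. {i}" Z] assms by auto

lemma indep_sub:
  assumes "g (S \<union> B) = g S + g B" "M \<subseteq> S" "S \<subseteq> N" "B \<subseteq> N"
  shows "g (M \<union> B) = g M + g B"
proof -
  have "g (M \<union> B \<union> S) + g ((M \<union> B) \<inter> S) \<le> g (M \<union> B) + g S" using assms by (intro pm_sub) auto
  moreover have "g M \<le> g ((M \<union> B) \<inter> S)" using assms by (intro pm_mono) auto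
  moreover have "M \<union> B \<union> S = S \<union> B" using assms by auto
  then have "g (M \<union> B \<union> S) = g S + g B" using assms(1) by metis
  ultimately have "g M + g B \<le> g (M \<union> B)" by linarith
  moreover have "g (M \<union> B) \<le> g M + g B" using assms by (intro pm_subadd) auto
  ultimately show ?thesis by simp
qed

lemma indep_singl_sub:
  assumes "finite W" "W \<subseteq> N" "g W = (\<Sum>i\<in>W. g {i})" "V \<subseteq> W"
  shows "g V = (\<Sum>i\<in>V. g {i})"
proof -
  have fV: "finite V" using finite_subset[OF assms(4) assms(1)] .
  have fW: "finite (W - V)" using assms(1) by simp
  have VN: "V \<subseteq> N" and WN: "W - V \<subseteq> N" using assms(2,4) by auto
  have "V \<union> (W - V) = W" using assms(4) by auto
  then have 1: "g W \<le> g V + g (W - V)" using pm_subadd[OF VN WN] by simp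
  have 2: "g (W - V) \<le> (\<Sum>i\<in>W - V. g {i})" by (rule pm_subadd_singl[OF fW WN])
  have 3: "g V \<le> (\<Sum>i\<in>V. g {i})" by (rule pm_subadd_singl[OF fV VN])
  have 4: "(\<Sum>i\<in>W. g {i}) = (\<Sum>i\<in>V. g {i}) + (\<Sum>i\<in>W - V. g {i})"
    using sum.subset_diff[OF assms(4) assms(1), of "\<lambda>i. g {i}"] by simp
  show ?thesis using 1 2 3 4 assms(3) by linarith
qed

end

lemma sum_le_eq_each:
  fixes f h :: "'a \<Rightarrow> real"
  assumes "finite I" "\<And>i. i \<in> I \<Longrightarrow> f i \<le> h i" "sum h I \<le> sum f I" "i \<in> I"
  shows "f i = h i"
proof (rule ccontr)
  assume "f i \<noteq> h i"
  then have "f i < h i" using assms(2)[OF assms(4)] by linarith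
  then have "sum f I < sum h I" using assms by (intro sum_strict_mono_ex1) auto
  then show False using assms by simp
qed

lemma Pdag_sel[simp]:
  "srcs (Pdag P) = {Src1, Src2}"
  "ltail (Pdag P) = dtail P"
  "lhead (Pdag P) = dhead P"
  "orig (Pdag P) = (\<lambda>_. {Phi})"
  by (simp_all add: Pdag_def)

lemma Pdag_links_mem[simp]:
  "OldL e \<in> links (Pdag P) \<longleftrightarrow> e \<in> links P"
  "La s \<in> links (Pdag P) \<longleftrightarrow> s \<in> srcs P"
  "Lb s \<in> links (Pdag P) \<longleftrightarrow> s \<in> srcs P"
  "Lc s \<in> links (Pdag P) \<longleftrightarrow> s \<in> srcs P"
  "Ld s u \<in> links (Pdag P) \<longleftrightarrow> s \<in> srcs P \<and> u \<in> dest P s"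
  by (auto simp: Pdag_def)

lemma Pdag_dest1: "dest (Pdag P) Src1 = {Tau s u | s u. s \<in> srcs P \<and> u \<in> dest P s} \<union> {Eta, EtaStar, Psi}"
  by (simp add: Pdag_def)
lemma Pdag_dest2: "dest (Pdag P) Src2 = {Eta, EtaStar}"
  by (simp add: Pdag_def)

lemma idx_Pdag_Inr[simp]: "Inr x \<in> idx (Pdag P) \<longleftrightarrow> x \<in> links (Pdag P)"
  by (auto simp: idx_def)
lemma idx_Pdag_Inl[simp]: "Inl x \<in> idx (Pdag P)"
  by (cases x) (auto simp: idx_def)

lemma in_link_La: "in_link (Pdag P) (La s) = {Inl Src1, Inl Src2}"
  unfolding in_link_def by (auto simp: Pdag_def elim!: dtail.elims dhead.elims)

lemma in_link_Lb: "in_link (Pdag P) (Lb s) = {Inl Src1, Inl Src2}"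
  unfolding in_link_def by (auto simp: Pdag_def elim!: dtail.elims dhead.elims)

lemma in_link_Lc: "s \<in> srcs P \<Longrightarrow> in_link (Pdag P) (Lc s) = {Inr (La s), Inr (Lb s)}"
  unfolding in_link_def by (auto simp: Pdag_def elim!: dhead.elims)

lemma in_node_OldN: "in_node (Pdag P) (OldN u) =
   Inr ` La ` {j\<in>srcs P. u \<in> orig P j} \<union> Inr ` OldL ` {f\<in>links P. u \<in> lhead P f}"
  unfolding in_node_def by (auto simp: Pdag_def elim!: dhead.elims)

lemma in_link_OldL: "in_link (Pdag P) (OldL e) = in_node (Pdag P) (OldN (ltail P e))"
  unfolding in_link_def in_node_def by simp

lemma in_link_Ld: "in_link (Pdag P) (Ld s u) = in_node (Pdag P) (OldN u)"
  unfolding in_link_def in_node_def by simp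

lemma in_node_Psi: "in_node (Pdag P) Psi = Inr ` Lb ` srcs P"
  unfolding in_node_def by (auto simp: Pdag_def elim!: dhead.elims)

lemma in_node_Eta: "in_node (Pdag P) Eta = Inr ` Lb ` srcs P \<union> Inr ` Lc ` srcs P"
  unfolding in_node_def by (auto simp: Pdag_def elim!: dhead.elims)

lemma in_node_EtaStar: "in_node (Pdag P) EtaStar = Inr ` La ` srcs P \<union> Inr ` Lc ` srcs P"
  unfolding in_node_def by (auto simp: Pdag_def elim!: dhead.elims)

lemma in_node_Tau: "s \<in> srcs P \<Longrightarrow> u \<in> dest P s \<Longrightarrow>
  in_node (Pdag P) (Tau s u) = Inr ` Lb ` (srcs P - {s}) \<union> {Inr (Lc s), Inr (Ld s u)}"
  unfolding in_node_def by (auto simp: Pdag_def elim!: dhead.elims)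

lemma sum_img_inj:
  assumes "inj f" shows "(\<Sum>i\<in>f ` S. h i) = (\<Sum>s\<in>S. h (f s))"
  using sum.reindex[of f S h] assms by (simp add: inj_on_def)

lemma part1_core:
  fixes P :: "('v, 'e, 's) problem" and l :: "'s \<Rightarrow> real"
    and g :: "(dsrc + ('v, 's, 'e) dlink) set \<Rightarrow> real"
  assumes valid: "valid_problem P"
    and lnn: "\<And>s. s \<in> srcs P \<Longrightarrow> 0 \<le> l s"
    and pmg: "pm (idx (Pdag P)) g"
    and CI: "g \<in> C_I (Pdag P)" and CT: "g \<in> C_T (Pdag P)" and CD: "g \<in> C_D (Pdag P)"
    and src1: "g {Inl Src1} \<ge> (\<Sum>s\<in>srcs P. l s)" and src2: "g {Inl Src2} \<ge> (\<Sum>s\<in>srcs P. l s)"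
    and capa: "\<And>s. s \<in> srcs P \<Longrightarrow> g {Inr (La s)} \<le> l s"
    and capb: "\<And>s. s \<in> srcs P \<Longrightarrow> g {Inr (Lb s)} \<le> l s"
    and capc: "\<And>s. s \<in> srcs P \<Longrightarrow> g {Inr (Lc s)} \<le> l s"
  shows "\<forall>s\<in>srcs P. g {Inr (La s)} = l s"
    and "g (Inr ` La ` srcs P) = (\<Sum>s\<in>srcs P. g {Inr (La s)})"
    and "\<forall>s\<in>srcs P. \<forall>u\<in>dest P s. det g {Inr (La s)} (in_node (Pdag P) (OldN u))"
proof -
  define N where "N = idx (Pdag P)"
  define S where "S = srcs P"
  define \<Lambda> where "\<Lambda> = (\<Sum>s\<in>S. l s)"
  define A where "A = (Inr ` La ` S :: (dsrc + ('v, 's, 'e) dlink) set)"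
  define B where "B = (Inr ` Lb ` S :: (dsrc + ('v, 's, 'e) dlink) set)"
  define C where "C = (Inr ` Lc ` S :: (dsrc + ('v, 's, 'e) dlink) set)"
  define X where "X = {Inl Src1 :: dsrc + ('v, 's, 'e) dlink}"
  define Y where "Y = {Inl Src2 :: dsrc + ('v, 's, 'e) dlink}"
  have pm: "pm N g" using pmg by (simp add: N_def)
  have finS: "finite S" using valid by (simp add: valid_problem_def S_def)
  have finL: "finite (links P)" using valid by (simp add: valid_problem_def)
  have finLd: "finite (links (Pdag P))"
  proof -
    have "{Ld s u |s u. s \<in> srcs P \<and> u \<in> dest P s} = (\<lambda>(s,u). Ld s u) ` (SIGMA s:srcs P. dest P s)" by auto
    moreover have "finite (SIGMA s:srcs P. dest P s)"
    proof (intro finite_SigmaI)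
      show "finite (srcs P)" using valid by (simp add: valid_problem_def)
      fix s assume "s \<in> srcs P"
      then show "finite (dest P s)" using valid finite_subset[of "dest P s" "nodes P"] unfolding valid_problem_def by blast
    qed
    ultimately have "finite {Ld s u |s u. s \<in> srcs P \<and> u \<in> dest P s}" by (metis finite_imageI)
    then show ?thesis using finS finL by (simp add: Pdag_def S_def)
  qed
  have finN: "finite N" using finLd by (simp add: N_def idx_def)
  have AN: "A \<subseteq> N" and BN: "B \<subseteq> N" and CN: "C \<subseteq> N" and XN: "X \<subseteq> N" and YN: "Y \<subseteq> N"
    by (auto simp: A_def B_def C_def X_def Y_def N_def S_def)
  have finA: "finite A" "finite B" "finite C" using finS by (simp_all add: A_def B_def C_def)
  note mono = pm_mono[OF pm] and subadd = pm_subadd[OF pm] and subsing = pm_subadd_singl[OF pm]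
  have sA: "(\<Sum>i\<in>A. g {i}) = (\<Sum>s\<in>S. g {Inr (La s)})" unfolding A_def image_image
    by (rule sum.reindex_cong[where l = "\<lambda>s. Inr (La s)"]) (auto simp: inj_on_def)
  have sB: "(\<Sum>i\<in>B. g {i}) = (\<Sum>s\<in>S. g {Inr (Lb s)})" unfolding B_def image_image
    by (rule sum.reindex_cong[where l = "\<lambda>s. Inr (Lb s)"]) (auto simp: inj_on_def)
  have sC: "(\<Sum>i\<in>C. g {i}) = (\<Sum>s\<in>S. g {Inr (Lc s)})" unfolding C_def image_image
    by (rule sum.reindex_cong[where l = "\<lambda>s. Inr (Lc s)"]) (auto simp: inj_on_def)
  have sAl: "(\<Sum>s\<in>S. g {Inr (La s)}) \<le> \<Lambda>" unfolding \<Lambda>_def by (rule sum_mono) (simp add: capa S_def)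
  have sBl: "(\<Sum>s\<in>S. g {Inr (Lb s)}) \<le> \<Lambda>" unfolding \<Lambda>_def by (rule sum_mono) (simp add: capb S_def)
  have sCl: "(\<Sum>s\<in>S. g {Inr (Lc s)}) \<le> \<Lambda>" unfolding \<Lambda>_def by (rule sum_mono) (simp add: capc S_def)
  have ct: "det g {Inr lk} (in_link (Pdag P) lk)" if "lk \<in> links (Pdag P)" for lk
    using CT that unfolding C_T_def det_def by (auto simp: Un_commute)
  have cd: "det g {Inl sr} (in_node (Pdag P) u)" if "sr \<in> {Src1, Src2}" "u \<in> dest (Pdag P) sr" for sr u
    using CD that unfolding C_D_def det_def by auto
  have ci: "g (X \<union> Y) = g X + g Y"
  proof -
    have "Inl ` srcs (Pdag P) = X \<union> Y" by (auto simp: X_def Y_def)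
    then show ?thesis using CI unfolding C_I_def by (simp add: X_def Y_def)
  qed
  have XB: "det g X B" using cd[of Src1 Psi] by (simp add: Pdag_dest1 in_node_Psi X_def B_def S_def)
  have gB: "g B \<le> \<Lambda>" using subsing[OF finA(2) BN] sB sBl by linarith
  have gX: "\<Lambda> \<le> g X" using src1 by (simp add: X_def \<Lambda>_def S_def)
  have "g X \<le> g (X \<union> B)" using XN BN by (intro mono) auto
  then have gXB: "g X = \<Lambda>" "g B = \<Lambda>" using XB gB gX by (auto simp: det_def)
  have XAC: "det g (X \<union> Y) (A \<union> C)"
  proof (rule det_union[OF pm])
    show "det g X (A \<union> C)" using cd[of Src1 EtaStar] by (simp add: Pdag_dest1 in_node_EtaStar X_def A_def C_def S_def)
    show "det g Y (A \<union> C)" using cd[of Src2 EtaStar] by (simp add: Pdag_dest2 in_node_EtaStar Y_def A_def C_def S_def)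
  qed (use XN YN AN CN in auto)
  have "g (X \<union> Y) \<le> g (X \<union> Y \<union> (A \<union> C))" using XN YN AN CN by (intro mono) auto
  also have "... = g (A \<union> C)" using XAC by (simp add: det_def)
  finally have gXY: "g (X \<union> Y) \<le> g (A \<union> C)" .
  have gAC: "g (A \<union> C) \<le> g A + g C" using AN CN by (rule subadd)
  have gA: "g A \<le> (\<Sum>i\<in>A. g {i})" by (rule subsing[OF finA(1) AN])
  have gC: "g C \<le> (\<Sum>i\<in>C. g {i})" by (rule subsing[OF finA(3) CN])
  have gY: "\<Lambda> \<le> g Y" using src2 by (simp add: Y_def \<Lambda>_def S_def)
  have eqA: "(\<Sum>s\<in>S. g {Inr (La s)}) = \<Lambda>" and eqC: "(\<Sum>s\<in>S. g {Inr (Lc s)}) = \<Lambda>"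
    and gAeq: "g A = \<Lambda>" and gACeq: "g (A \<union> C) = 2 * \<Lambda>" and gYeq: "g Y = \<Lambda>"
    using gXY gAC gA gC sA sC sAl sCl ci gXB gY by linarith+
  have aeq: "g {Inr (La s)} = l s" if "s \<in> S" for s
    by (rule sum_le_eq_each[OF finS _ _ that]) (use capa eqA in \<open>auto simp: S_def \<Lambda>_def\<close>)
  have ceq: "g {Inr (Lc s)} = l s" if "s \<in> S" for s
    by (rule sum_le_eq_each[OF finS _ _ that]) (use capc eqC in \<open>auto simp: S_def \<Lambda>_def\<close>)
  have eqB: "(\<Sum>s\<in>S. g {Inr (Lb s)}) = \<Lambda>" using subsing[OF finA(2) BN] sB sBl gXB by linarith
  have beq: "g {Inr (Lb s)} = l s" if "s \<in> S" for s
    by (rule sum_le_eq_each[OF finS _ _ that]) (use capb eqB in \<open>auto simp: S_def \<Lambda>_def\<close>)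
  show "\<forall>s\<in>srcs P. g {Inr (La s)} = l s" using aeq by (simp add: S_def)
  show "g (Inr ` La ` srcs P) = (\<Sum>s\<in>srcs P. g {Inr (La s)})" using gAeq eqA by (simp add: A_def S_def)
  have BCind: "g (B \<union> C) = (\<Sum>i\<in>B \<union> C. g {i})"
  proof -
    have XBC: "det g (X \<union> Y) (B \<union> C)"
    proof (rule det_union[OF pm])
      show "det g X (B \<union> C)" using cd[of Src1 Eta] by (simp add: Pdag_dest1 in_node_Eta X_def B_def C_def S_def)
      show "det g Y (B \<union> C)" using cd[of Src2 Eta] by (simp add: Pdag_dest2 in_node_Eta Y_def B_def C_def S_def)
    qed (use XN YN BN CN in auto)
    have "g (X \<union> Y) \<le> g (X \<union> Y \<union> (B \<union> C))" using XN YN BN CN by (intro mono) auto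
    also have "... = g (B \<union> C)" using XBC by (simp add: det_def)
    finally have 1: "g (X \<union> Y) \<le> g (B \<union> C)" .
    have 2: "g (B \<union> C) \<le> (\<Sum>i\<in>B \<union> C. g {i})" using finA BN CN by (intro subsing) auto
    have "B \<inter> C = {}" by (auto simp: B_def C_def)
    then have 3: "(\<Sum>i\<in>B \<union> C. g {i}) = (\<Sum>i\<in>B. g {i}) + (\<Sum>i\<in>C. g {i})"
      using finA by (simp add: sum.union_disjoint)
    show ?thesis using 1 2 3 sB sC eqB eqC ci gXB gYeq by linarith
  qed
  have BX: "det g B X" using XB gXB by (simp add: det_def Un_commute)
  have wf: "wf (node_rel P)"
  proof (rule finite_acyclic_wf)
    have "node_rel P \<subseteq> (\<Union>e\<in>links P. {ltail P e} \<times> lhead P e)"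
      by (auto simp: node_rel_def)
    moreover have "finite (\<Union>e\<in>links P. {ltail P e} \<times> lhead P e)"
    proof (intro finite_UN_I)
      show "finite (links P)" by (rule finL)
      fix e assume "e \<in> links P"
      then have "finite (lhead P e)" using valid finite_subset[of "lhead P e" "nodes P"] unfolding valid_problem_def by blast
      then show "finite ({ltail P e} \<times> lhead P e)" by simp
    qed
    ultimately show "finite (node_rel P)" by (rule finite_subset)
    show "acyclic (node_rel P)" using valid by (simp add: valid_problem_def)
  qed
  have oldA: "\<forall>e\<in>links P. ltail P e = v \<longrightarrow> det g {Inr (OldL e)} A" for v
  proof (induction v rule: wf_induct[OF wf])
    case (1 v)
    show ?case
    proof (intro ballI impI)
      fix e assume e: "e \<in> links P" "ltail P e = v"
      have inl: "in_link (Pdag P) (OldL e) \<subseteq> N" using e by (auto simp: in_link_OldL in_node_OldN N_def)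
      have "det g (in_link (Pdag P) (OldL e)) A"
      proof (rule det_singletons[OF pm])
        show "finite (in_link (Pdag P) (OldL e))" using inl finN finite_subset by blast
        show "in_link (Pdag P) (OldL e) \<subseteq> N" by (rule inl)
        show "A \<subseteq> N" by (rule AN)
        fix i assume i: "i \<in> in_link (Pdag P) (OldL e)"
        then consider (a) j where "j \<in> S" "i = Inr (La j)" | (o) f where "f \<in> links P" "v \<in> lhead P f" "i = Inr (OldL f)"
          using e by (auto simp: in_link_OldL in_node_OldN S_def)
        then show "det g {i} A"
        proof cases
          case a then show ?thesis by (intro det_subset[OF pm]) (auto simp: A_def)
        next
          case o
          then have "(ltail P f, v) \<in> node_rel P" by (auto simp: node_rel_def)
          then show ?thesis using 1 o by auto
        qed
      qed
      moreover have "det g {Inr (OldL e)} (in_link (Pdag P) (OldL e))" using e by (intro ct) simp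
      ultimately show "det g {Inr (OldL e)} A"
        using det_trans[OF pm] inl AN e by (auto simp: N_def)
    qed
  qed
  have NUA: "det g (in_node (Pdag P) (OldN u)) A" and NUN: "in_node (Pdag P) (OldN u) \<subseteq> N" for u
  proof -
    show NUN: "in_node (Pdag P) (OldN u) \<subseteq> N" by (auto simp: in_node_OldN N_def)
    show "det g (in_node (Pdag P) (OldN u)) A"
    proof (rule det_singletons[OF pm _ _ NUN AN])
      show "finite (in_node (Pdag P) (OldN u))" using NUN finN finite_subset by blast
      fix i assume "i \<in> in_node (Pdag P) (OldN u)"
      then consider (a) j where "j \<in> S" "i = Inr (La j)" | (o) f where "f \<in> links P" "i = Inr (OldL f)"
        by (auto simp: in_node_OldN S_def)
      then show "det g {i} A"
      proof cases
        case a then show ?thesis by (intro det_subset[OF pm]) (auto simp: A_def)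
      next
        case o then show ?thesis using oldA by auto
      qed
    qed
  qed
  show "\<forall>s\<in>srcs P. \<forall>u\<in>dest P s. det g {Inr (La s)} (in_node (Pdag P) (OldN u))"
  proof (intro ballI)
    fix s u assume s: "s \<in> srcs P" and u: "u \<in> dest P s"
    have sS: "s \<in> S" using s by (simp add: S_def)
    define a where "a = (Inr (La s) :: dsrc + ('v, 's, 'e) dlink)"
    define b where "b = (Inr (Lb s) :: dsrc + ('v, 's, 'e) dlink)"
    define c where "c = (Inr (Lc s) :: dsrc + ('v, 's, 'e) dlink)"
    define d where "d = (Inr (Ld s u) :: dsrc + ('v, 's, 'e) dlink)"
    define Bm where "Bm = (Inr ` Lb ` (S - {s}) :: (dsrc + ('v, 's, 'e) dlink) set)"
    define E where "E = Bm \<union> {c}"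
    define NU where "NU = in_node (Pdag P) (OldN u)"
    have aN: "a \<in> N" and bN: "b \<in> N" and cN: "c \<in> N" and dN: "d \<in> N" and BmN: "Bm \<subseteq> N" and EN: "E \<subseteq> N"
      using s u by (auto simp: a_def b_def c_def d_def Bm_def E_def N_def S_def)
    have NUN': "NU \<subseteq> N" using NUN by (simp add: NU_def)
    have bc: "g {b, c} = 2 * l s"
    proof -
      have "g {b, c} = (\<Sum>i\<in>{b, c}. g {i})"
        by (rule indep_singl_sub[OF pm _ _ BCind]) (use finA BN CN sS in \<open>auto simp: b_def c_def B_def C_def\<close>)
      then show ?thesis using beq[OF sS] ceq[OF sS] by (simp add: b_def c_def)
    qed
    have cab: "det g {c} {a, b}" using ct[of "Lc s"] s by (simp add: in_link_Lc a_def b_def c_def)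
    have "g {a, b} \<le> g {a} + g {b}" using aN bN subadd[of "{a}" "{b}"] by (simp add: insert_commute)
    then have ab: "g {a, b} \<le> 2 * l s" using aeq[OF sS] beq[OF sS] by (simp add: a_def b_def)
    have "g {b, c} \<le> g ({c} \<union> {a, b})" using aN bN cN by (intro mono) auto
    also have "... = g {a, b}" using cab by (simp add: det_def)
    finally have "g ({a} \<union> {b, c}) \<le> g {b, c}" using ab bc
      by (metis insert_commute insert_is_Un \<open>g ({c} \<union> {a, b}) = g {a, b}\<close> order_trans)
    then have abc: "det g {a} {b, c}" using aN bN cN by (simp add: det_iff[OF pm])
    have CAE: "det g C (A \<union> E)"
    proof (rule det_singletons[OF pm finA(3) _ CN])
      show "A \<union> E \<subseteq> N" using AN EN by auto
      fix i assume "i \<in> C"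
      then obtain j where j: "j \<in> S" "i = Inr (Lc j)" by (auto simp: C_def)
      show "det g {i} (A \<union> E)"
      proof (cases "j = s")
        case True then show ?thesis using j by (intro det_subset[OF pm]) (auto simp: E_def c_def)
      next
        case False
        have "det g {i} {Inr (La j), Inr (Lb j)}" using ct[of "Lc j"] j by (simp add: in_link_Lc S_def)
        then show ?thesis
          by (rule det_mono_right[OF pm]) (use j False AN EN in \<open>auto simp: A_def E_def Bm_def N_def S_def\<close>)
      qed
    qed
    have gE: "g E \<le> \<Lambda>"
    proof -
      have "g E \<le> (\<Sum>i\<in>E. g {i})" using finS EN by (intro subsing) (auto simp: E_def Bm_def)
      also have "... = (\<Sum>i\<in>Bm. g {i}) + g {c}"
        unfolding E_def using finS by (subst sum.union_disjoint) (auto simp: Bm_def c_def)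
      also have "(\<Sum>i\<in>Bm. g {i}) = (\<Sum>j\<in>S - {s}. g {Inr (Lb j)})" unfolding Bm_def image_image
        by (rule sum.reindex_cong[where l = "\<lambda>s. Inr (Lb s)"]) (auto simp: inj_on_def)
      also have "... = (\<Sum>j\<in>S - {s}. l j)" using beq by (intro sum.cong) auto
      also have "... = \<Lambda> - l s" using finS sS by (simp add: \<Lambda>_def sum_diff1)
      finally show ?thesis using ceq[OF sS] by (simp add: c_def)
    qed
    have AEind: "g (A \<union> E) = g A + g E"
    proof -
      have "g (A \<union> C) \<le> g (A \<union> E \<union> C)" using AN EN CN by (intro mono) auto
      also have "... = g (A \<union> E)" using CAE by (simp add: det_def Un_commute)
      finally have "2 * \<Lambda> \<le> g (A \<union> E)" using gACeq by simp
      moreover have "g (A \<union> E) \<le> g A + g E" using AN EN by (rule subadd)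
      ultimately show ?thesis using gAeq gE by linarith
    qed
    define Z where "Z = E \<union> NU"
    have ZN: "Z \<subseteq> N" using EN NUN' by (simp add: Z_def)
    have dNU: "det g {d} NU" using ct[of "Ld s u"] s u by (simp add: in_link_Ld d_def NU_def)
    have dZ: "det g {d} Z" by (rule det_mono_right[OF pm dNU]) (use dN ZN in \<open>auto simp: Z_def\<close>)
    have XT: "det g X (Bm \<union> {c, d})"
      using cd[of Src1 "Tau s u"] s u by (auto simp: Pdag_dest1 in_node_Tau X_def Bm_def c_def d_def S_def)
    have TZ: "det g (Bm \<union> {c, d}) Z"
    proof -
      have "det g (Bm \<union> {c} \<union> {d}) Z"
        by (rule det_union[OF pm]) (use dZ BmN cN dN ZN in \<open>auto intro: det_subset[OF pm] simp: Z_def E_def\<close>)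
      then show ?thesis by (simp add: Un_ac insert_commute)
    qed
    have XZ: "det g X Z" by (rule det_trans[OF pm XT TZ]) (use XN BmN cN dN ZN in auto)
    have bZ: "det g {b} Z"
    proof (rule det_trans[OF pm _ XZ])
      show "det g {b} X" by (rule det_sub[OF pm BX]) (use sS BN XN in \<open>auto simp: b_def B_def\<close>)
    qed (use bN XN ZN in auto)
    have bcZ: "det g {b, c} Z"
    proof -
      have "det g ({b} \<union> {c}) Z" by (rule det_union[OF pm bZ]) (use bN cN ZN in \<open>auto intro: det_subset[OF pm] simp: Z_def E_def\<close>)
      then show ?thesis by (simp add: insert_commute)
    qed
    have aZ: "det g {a} Z" by (rule det_trans[OF pm abc bcZ]) (use aN bN cN ZN in auto)
    define M where "M = {a} \<union> NU"
    define Sx where "Sx = A \<union> NU"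
    have SxN: "Sx \<subseteq> N" using AN NUN' by (simp add: Sx_def)
    have gSx: "g Sx = g A" using NUA[of u] by (simp add: det_def Sx_def NU_def Un_commute)
    have "det g NU (A \<union> E)" by (rule det_mono_right[OF pm NUA[of u, folded NU_def]]) (use NUN' AN EN in auto)
    then have "g (Sx \<union> E) = g (A \<union> E)" by (simp add: det_def Sx_def Un_ac)
    then have SxE: "g (Sx \<union> E) = g Sx + g E" using AEind gSx by simp
    have MS: "M \<subseteq> Sx" using sS by (auto simp: M_def Sx_def a_def A_def)
    have ME: "g (M \<union> E) = g M + g E" by (rule indep_sub[OF pm SxE MS SxN EN])
    have "g (M \<union> E) = g ({a} \<union> Z)" by (simp add: M_def Z_def Un_ac)
    also have "... = g Z" using aZ by (simp add: det_def)
    also have "... \<le> g NU + g E" unfolding Z_def using EN NUN' by (subst Un_commute) (rule subadd)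
    finally have "g M \<le> g NU" using ME by simp
    then show "det g {Inr (La s)} (in_node (Pdag P) (OldN u))"
      using aN NUN' by (simp add: det_iff[OF pm] M_def a_def NU_def)
  qed
qed

lemma subseq_conv_finite:
  fixes f :: "nat \<Rightarrow> 'a \<Rightarrow> real"
  assumes "finite F" "\<And>A n. A \<in> F \<Longrightarrow> \<bar>f n A\<bar> \<le> K A"
  shows "\<exists>r. strict_mono r \<and> (\<forall>A\<in>F. convergent (\<lambda>n. f (r n) A))"
  using assms
proof (induction F rule: finite_induct)
  case empty then show ?case by (intro exI[of _ id]) (auto simp: strict_mono_def)
next
  case (insert A F)
  then obtain r where r: "strict_mono r" "\<forall>B\<in>F. convergent (\<lambda>n. f (r n) B)" by auto
  have "Bseq (\<lambda>n. f (r n) A)" using insert.prems[of A] by (intro BseqI'[where K = "K A"]) auto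
  obtain r' where r': "strict_mono r'" "monoseq (\<lambda>n. f (r (r' n)) A)"
    using seq_monosub[of "\<lambda>n. f (r n) A"] by (auto simp: o_def)
  have "Bseq (\<lambda>n. f (r (r' n)) A)" using insert.prems[of A] by (intro BseqI'[where K = "K A"]) auto
  then have cA: "convergent (\<lambda>n. f (r (r' n)) A)" using r'(2) Bseq_monoseq_convergent by blast
  have cF: "convergent (\<lambda>n. f (r (r' n)) B)" if "B \<in> F" for B
  proof -
    have "convergent ((\<lambda>n. f (r n) B) \<circ> r')" using r(2) that convergent_subseq_convergent r'(1) by blast
    then show ?thesis by (simp add: o_def)
  qed
  show ?case using cA cF r r' strict_mono_o[of r r'] by (intro exI[of _ "r \<circ> r'"]) (auto simp: o_def)
qed

definition rho1 :: "'s + 'e \<Rightarrow> dsrc + ('v, 's, 'e) dlink" where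
  "rho1 = case_sum (\<lambda>s. Inr (La s)) (\<lambda>e. Inr (OldL e))"

lemma inj_rho1: "inj rho1"
  by (auto simp: inj_def rho1_def split: sum.splits)

lemma rho1_in_node: "rho1 ` in_node P u = in_node (Pdag P) (OldN u)"
proof -
  have "in_node P u = Inl ` {j\<in>srcs P. u \<in> orig P j} \<union> Inr ` {f\<in>links P. u \<in> lhead P f}"
    by (auto simp: in_node_def)
  then show ?thesis by (simp add: in_node_OldN image_Un image_image rho1_def)
qed

lemma rho1_in_link: "rho1 ` in_link P e = in_link (Pdag P) (OldL e)"
proof -
  have "in_link P e = in_node P (ltail P e)" by (simp add: in_link_def in_node_def)
  then show ?thesis by (simp add: rho1_in_node in_link_OldL)
qed

lemma finite_links_Pdag:
  assumes valid: "valid_problem P" shows "finite (links (Pdag P))"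
proof -
  have finS: "finite (srcs P)" and finL: "finite (links P)" using valid by (simp_all add: valid_problem_def)
  have "{Ld s u |s u. s \<in> srcs P \<and> u \<in> dest P s} = (\<lambda>(s,u). Ld s u) ` (SIGMA s:srcs P. dest P s)" by auto
  moreover have "finite (SIGMA s:srcs P. dest P s)"
  proof (intro finite_SigmaI)
    show "finite (srcs P)" by (rule finS)
    fix s assume "s \<in> srcs P"
    then show "finite (dest P s)" using valid finite_subset[of "dest P s" "nodes P"] unfolding valid_problem_def by blast
  qed
  ultimately have "finite {Ld s u |s u. s \<in> srcs P \<and> u \<in> dest P s}" by (metis finite_imageI)
  then show ?thesis using finS finL by (simp add: Pdag_def)
qed

lemma part1:
  fixes P :: "('v, 'e, 's) problem" and l :: "'s \<Rightarrow> real" and w :: "'e \<Rightarrow> real"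
  assumes valid: "valid_problem P" and rt: "rate_capacity_tuple P (l, w)"
    and ob: "Tdag P (l, w) \<in> outer_bound (Pdag P)"
  shows "(l, w) \<in> outer_bound P"
proof -
  define N where "N = idx (Pdag P)"
  have finN: "finite N" using finite_links_Pdag[OF valid] by (simp add: N_def idx_def)
  obtain ts c where ts: "\<And>n. ts n \<in> proj (Pdag P) ` (Gamma_bar (Pdag P) \<inter> C_I (Pdag P) \<inter> C_T (Pdag P) \<inter> C_D (Pdag P))"
    and cpos: "\<And>n. c n > 0"
    and lk: "\<And>e. e \<in> links (Pdag P) \<Longrightarrow> \<exists>L. (\<lambda>n. c n * snd (ts n) e) \<longlonglongrightarrow> L \<and> L \<le> snd (Tdag P (l, w)) e"
    and sr: "\<And>s. s \<in> srcs (Pdag P) \<Longrightarrow> \<exists>L. (\<lambda>n. c n * fst (ts n) s) \<longlonglongrightarrow> L \<and> L \<ge> fst (Tdag P (l, w)) s"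
    using ob unfolding outer_bound_def CL_def by blast
  obtain H where H: "\<And>n. ts n = proj (Pdag P) (H n)"
    "\<And>n. H n \<in> Gamma_bar (Pdag P) \<inter> C_I (Pdag P) \<inter> C_T (Pdag P) \<inter> C_D (Pdag P)"
  proof -
    have "\<forall>n. \<exists>h. ts n = proj (Pdag P) h \<and> h \<in> Gamma_bar (Pdag P) \<inter> C_I (Pdag P) \<inter> C_T (Pdag P) \<inter> C_D (Pdag P)"
      using ts by blast
    then show ?thesis using that by metis
  qed
  define G where "G n A = c n * H n A" for n A
  have Galm: "almost_entropic_on N (G n)" for n
    unfolding G_def[abs_def] using H(2)[of n] cpos[of n] almost_scale[of N "H n" "c n"] by (simp add: Gamma_bar_def G_def N_def)
  have Gpm: "pm N (G n)" for n by (rule almost_pm[OF finN Galm])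
  have GCI: "G n (Inl ` srcs (Pdag P)) = (\<Sum>s\<in>srcs (Pdag P). G n {Inl s})" for n
    using H(2)[of n] by (simp add: C_I_def G_def sum_distrib_left distrib_left)
  have GCT: "\<forall>e\<in>links (Pdag P). G n (in_link (Pdag P) e \<union> {Inr e}) - G n (in_link (Pdag P) e) = 0" for n
    using H(2)[of n] by (simp add: C_T_def G_def right_diff_distrib[symmetric])
  have GCD: "\<forall>s\<in>srcs (Pdag P). \<forall>u\<in>dest (Pdag P) s. G n ({Inl s} \<union> in_node (Pdag P) u) - G n (in_node (Pdag P) u) = 0" for n
    using H(2)[of n] by (simp add: C_D_def G_def right_diff_distrib[symmetric])
  have sconv: "\<exists>L. (\<lambda>n. G n {i}) \<longlonglongrightarrow> L" if "i \<in> N" for i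
  proof (cases i)
    case (Inl x)
    then have "x \<in> srcs (Pdag P)" by (cases x) auto
    then show ?thesis using sr[of x] H(1) Inl by (auto simp: G_def proj_def)
  next
    case (Inr x)
    then have "x \<in> links (Pdag P)" using that by (simp add: N_def)
    then show ?thesis using lk[of x] H(1) Inr by (auto simp: G_def proj_def)
  qed
  have "\<exists>K. \<forall>n. \<bar>G n {i}\<bar> \<le> K" if iN: "i \<in> N" for i
  proof -
    obtain L where "(\<lambda>n. G n {i}) \<longlonglongrightarrow> L" using sconv[OF iN] by blast
    then have "Bseq (\<lambda>n. G n {i})" by (rule convergent_imp_Bseq[OF convergentI])
    then show ?thesis by (auto simp: Bseq_def)
  qed
  then obtain K where K: "\<And>i n. i \<in> N \<Longrightarrow> \<bar>G n {i}\<bar> \<le> K i" by metis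
  have bnd: "\<bar>G n A\<bar> \<le> (\<Sum>i\<in>N. K i)" if "A \<in> Pow N" for n A
  proof -
    have "0 \<le> G n A" using that pm_nonneg[OF Gpm] by auto
    moreover have "G n A \<le> G n N" using that pm_mono[OF Gpm] by auto
    moreover have "G n N \<le> (\<Sum>i\<in>N. G n {i})" by (rule pm_subadd_singl[OF Gpm finN]) simp
    moreover have "(\<Sum>i\<in>N. G n {i}) \<le> (\<Sum>i\<in>N. K i)" using K by (intro sum_mono) (auto simp: abs_le_iff)
    ultimately show ?thesis by simp
  qed
  obtain r where r: "strict_mono r" "\<And>A. A \<in> Pow N \<Longrightarrow> convergent (\<lambda>n. G (r n) A)"
    using subseq_conv_finite[of "Pow N" G "\<lambda>_. \<Sum>i\<in>N. K i"] finN bnd by blast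
  define g where "g A = lim (\<lambda>n. G (r n) A)" for A
  have glim: "(\<lambda>n. G (r n) A) \<longlonglongrightarrow> g A" if "A \<subseteq> N" for A
    using r(2)[of A] that by (simp add: g_def convergent_LIMSEQ_iff)
  have galm: "almost_entropic_on N g"
    by (rule almost_limit[OF finN Galm glim])
  have gpm: "pm N g" by (rule almost_pm[OF finN galm])
  have Nsub: "in_link (Pdag P) e \<subseteq> N" if "e \<in> links (Pdag P)" for e
    using that by (auto simp: in_link_def N_def idx_def)
  have Nsub2: "in_node (Pdag P) u \<subseteq> N" for u
    by (auto simp: in_node_def N_def idx_def)
  have gCI: "g \<in> C_I (Pdag P)"
  proof -
    have "(\<lambda>n. G (r n) (Inl ` srcs (Pdag P))) \<longlonglongrightarrow> g (Inl ` srcs (Pdag P))" by (rule glim) (auto simp: N_def)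
    moreover have "(\<lambda>n. G (r n) (Inl ` srcs (Pdag P))) \<longlonglongrightarrow> (\<Sum>s\<in>srcs (Pdag P). g {Inl s})"
      unfolding GCI by (intro tendsto_sum glim) (auto simp: N_def)
    ultimately show ?thesis unfolding C_I_def using LIMSEQ_unique by blast
  qed
  have gCT: "g \<in> C_T (Pdag P)" unfolding C_T_def
  proof (intro CollectI ballI)
    fix e assume e: "e \<in> links (Pdag P)"
    have "(\<lambda>n. G (r n) (in_link (Pdag P) e \<union> {Inr e}) - G (r n) (in_link (Pdag P) e)) \<longlonglongrightarrow>
       g (in_link (Pdag P) e \<union> {Inr e}) - g (in_link (Pdag P) e)"
      using e Nsub[OF e] by (intro tendsto_diff glim) (auto simp: N_def)
    moreover have "(\<lambda>n. G (r n) (in_link (Pdag P) e \<union> {Inr e}) - G (r n) (in_link (Pdag P) e)) = (\<lambda>n. 0)"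
      using GCT e by auto
    ultimately show "g (in_link (Pdag P) e \<union> {Inr e}) - g (in_link (Pdag P) e) = 0"
      using LIMSEQ_unique tendsto_const by metis
  qed
  have gCD: "g \<in> C_D (Pdag P)" unfolding C_D_def
  proof (intro CollectI ballI)
    fix s u assume s: "s \<in> srcs (Pdag P)" and u: "u \<in> dest (Pdag P) s"
    have "(\<lambda>n. G (r n) ({Inl s} \<union> in_node (Pdag P) u) - G (r n) (in_node (Pdag P) u)) \<longlonglongrightarrow>
       g ({Inl s} \<union> in_node (Pdag P) u) - g (in_node (Pdag P) u)"
      using Nsub2[of u] by (intro tendsto_diff glim) (auto simp: N_def)
    moreover have "(\<lambda>n. G (r n) ({Inl s} \<union> in_node (Pdag P) u) - G (r n) (in_node (Pdag P) u)) = (\<lambda>n. 0)"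
      using GCD s u by auto
    ultimately show "g ({Inl s} \<union> in_node (Pdag P) u) - g (in_node (Pdag P) u) = 0"
      using LIMSEQ_unique tendsto_const by metis
  qed
  have glink: "g {Inr e} \<le> snd (Tdag P (l, w)) e" if eL: "e \<in> links (Pdag P)" for e
  proof -
    obtain L where L: "(\<lambda>n. c n * snd (ts n) e) \<longlonglongrightarrow> L" "L \<le> snd (Tdag P (l, w)) e" using lk[OF eL] by blast
    then have "(\<lambda>n. G n {Inr e}) \<longlonglongrightarrow> L" using H(1) by (simp add: G_def proj_def)
    then have "(\<lambda>n. G (r n) {Inr e}) \<longlonglongrightarrow> L" using LIMSEQ_subseq_LIMSEQ[OF _ r(1)] by (simp add: o_def)
    moreover have "(\<lambda>n. G (r n) {Inr e}) \<longlonglongrightarrow> g {Inr e}" using eL by (intro glim) (simp add: N_def)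
    ultimately show ?thesis using L(2) LIMSEQ_unique by metis
  qed
  have gsrc: "g {Inl x} \<ge> (\<Sum>s\<in>srcs P. l s)" if xS: "x \<in> {Src1, Src2}" for x
  proof -
    obtain L where L: "(\<lambda>n. c n * fst (ts n) x) \<longlonglongrightarrow> L" "L \<ge> fst (Tdag P (l, w)) x" using sr[of x] xS by auto
    then have "(\<lambda>n. G n {Inl x}) \<longlonglongrightarrow> L" using H(1) by (simp add: G_def proj_def)
    then have "(\<lambda>n. G (r n) {Inl x}) \<longlonglongrightarrow> L" using LIMSEQ_subseq_LIMSEQ[OF _ r(1)] by (simp add: o_def)
    moreover have "(\<lambda>n. G (r n) {Inl x}) \<longlonglongrightarrow> g {Inl x}" by (intro glim) (simp add: N_def)
    ultimately show ?thesis using L(2) LIMSEQ_unique by (metis Tdag_def fst_conv)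
  qed
  have lnn: "\<And>s. s \<in> srcs P \<Longrightarrow> 0 \<le> l s" using rt by (simp add: rate_capacity_tuple_def)
  have capa: "g {Inr (La s)} \<le> l s" if "s \<in> srcs P" for s using glink[of "La s"] that by (simp add: Tdag_def)
  have capb: "g {Inr (Lb s)} \<le> l s" if "s \<in> srcs P" for s using glink[of "Lb s"] that by (simp add: Tdag_def)
  have capc: "g {Inr (Lc s)} \<le> l s" if "s \<in> srcs P" for s using glink[of "Lc s"] that by (simp add: Tdag_def)
  note core = part1_core[OF valid lnn gpm[unfolded N_def] gCI gCT gCD gsrc gsrc capa capb capc]
  have c1: "\<forall>s\<in>srcs P. g {Inr (La s)} = l s" "g (Inr ` La ` srcs P) = (\<Sum>s\<in>srcs P. g {Inr (La s)})"
    "\<forall>s\<in>srcs P. \<forall>u\<in>dest P s. det g {Inr (La s)} (in_node (Pdag P) (OldN u))"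
    using core by auto
  define h where "h A = g (rho1 ` A)" for A
  have halm: "almost_entropic_on (idx P) h" unfolding h_def
    by (rule almost_relabel[OF inj_rho1 galm]) (auto simp: N_def idx_def rho1_def)
  have hCI: "h \<in> C_I P"
  proof -
    have "rho1 ` Inl ` srcs P = Inr ` La ` srcs P" by (simp add: image_image rho1_def)
    then have "h (Inl ` srcs P) = g (Inr ` La ` srcs P)" unfolding h_def by (rule arg_cong)
    moreover have "h {Inl s} = g {Inr (La s)}" for s by (simp add: h_def rho1_def)
    ultimately show ?thesis using c1(2) by (simp add: C_I_def)
  qed
  have hCT: "h \<in> C_T P"
  proof -
    have "rho1 ` (in_link P e \<union> {Inr e}) = in_link (Pdag P) (OldL e) \<union> {Inr (OldL e)}" for e
      by (simp only: image_Un rho1_in_link image_insert image_empty) (simp add: rho1_def)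
    then show ?thesis using gCT by (auto simp: C_T_def h_def rho1_in_link)
  qed
  have hCD: "h \<in> C_D P"
  proof -
    have "rho1 ` ({Inl s} \<union> in_node P u) = {Inr (La s)} \<union> in_node (Pdag P) (OldN u)" for s u
      by (simp only: image_Un rho1_in_node image_insert image_empty) (simp add: rho1_def)
    then show ?thesis using c1(3) by (auto simp: C_D_def h_def rho1_in_node det_def)
  qed
  show ?thesis unfolding outer_bound_def CL_def
  proof (intro CollectI exI[of _ "\<lambda>n. proj P h"] exI[of _ "\<lambda>n. 1"] conjI allI ballI)
    show "proj P h \<in> proj P ` (Gamma_bar P \<inter> C_I P \<inter> C_T P \<inter> C_D P)" for n
      using halm hCI hCT hCD by (auto simp: Gamma_bar_def)
    show "(0::real) < 1" by simp
  next
    fix e assume e: "e \<in> links P"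
    have "h {Inr e} \<le> w e" using glink[of "OldL e"] e by (simp add: h_def rho1_def Tdag_def)
    then show "\<exists>L. (\<lambda>n. 1 * snd (proj P h) e) \<longlonglongrightarrow> L \<and> L \<le> snd (l, w) e" by (auto simp: proj_def)
  next
    fix s assume s: "s \<in> srcs P"
    have "h {Inl s} = l s" using c1(1) s by (simp add: h_def rho1_def)
    then show "\<exists>L. (\<lambda>n. 1 * fst (proj P h) s) \<longlonglongrightarrow> L \<and> fst (l, w) s \<le> L" by (auto simp: proj_def)
  qed
qed

definition XS :: "('v, 'e, 's) problem \<Rightarrow> ('s \<Rightarrow> nat set) \<Rightarrow> ('s \<Rightarrow> nat) set" where
  "XS P A = PiE_dflt (srcs P) 0 A"

definition vl :: "(('s \<Rightarrow> nat) \<Rightarrow> 'e \<Rightarrow> nat) \<Rightarrow> ('s \<Rightarrow> nat) \<Rightarrow> 's + 'e \<Rightarrow> nat" where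
  "vl F x = case_sum x (F x)"

definition dcode :: "('v, 'e, 's) problem \<Rightarrow> ('s \<Rightarrow> nat set) \<Rightarrow> (('s \<Rightarrow> nat) \<Rightarrow> 'e \<Rightarrow> nat) \<Rightarrow> bool" where
  "dcode P A F \<longleftrightarrow> (\<forall>s\<in>srcs P. finite (A s) \<and> A s \<noteq> {}) \<and>
     (\<forall>e\<in>links P. \<forall>x\<in>XS P A. \<forall>x'\<in>XS P A. (\<forall>i\<in>in_link P e. vl F x i = vl F x' i) \<longrightarrow> F x e = F x' e) \<and>
     (\<forall>s\<in>srcs P. \<forall>u\<in>dest P s. \<forall>x\<in>XS P A. \<forall>x'\<in>XS P A. (\<forall>i\<in>in_node P u. vl F x i = vl F x' i) \<longrightarrow> x s = x' s)"

definition LV :: "('v, 'e, 's) problem \<Rightarrow> ('s \<Rightarrow> nat set) \<Rightarrow> (('s \<Rightarrow> nat) \<Rightarrow> 'e \<Rightarrow> nat) \<Rightarrow> 'e \<Rightarrow> nat set" where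
  "LV P A F e = (\<lambda>x. F x e) ` XS P A"

definition dpmf :: "('v, 'e, 's) problem \<Rightarrow> ('s \<Rightarrow> nat set) \<Rightarrow> (('s \<Rightarrow> nat) \<Rightarrow> 'e \<Rightarrow> nat) \<Rightarrow> ('s + 'e \<Rightarrow> nat) pmf" where
  "dpmf P A F = map_pmf (vl F) (Pi_pmf (srcs P) 0 (\<lambda>s. pmf_of_set (A s)))"

lemma pmf_map_inj_on_super:
  assumes "inj_on f T" "set_pmf M \<subseteq> T" "x \<in> T"
  shows "pmf (map_pmf f M) (f x) = pmf M x"
proof (cases "x \<in> set_pmf M")
  case True
  then show ?thesis using assms by (intro pmf_map_inj) (auto intro: inj_on_subset)
next
  case False
  have "f x \<notin> set_pmf (map_pmf f M)"
  proof
    assume "f x \<in> set_pmf (map_pmf f M)"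
    then obtain y where "y \<in> set_pmf M" "f x = f y" by auto
    then have "x = y" using assms by (metis inj_onD subsetD)
    then show False using False \<open>y \<in> set_pmf M\<close> by simp
  qed
  then show ?thesis using False by (simp add: set_pmf_eq)
qed

context
  fixes P :: "('v, 'e, 's) problem" and A F
  assumes finS: "finite (srcs P)" and dc: "dcode P A F"
begin

lemma dc_A: "s \<in> srcs P \<Longrightarrow> finite (A s)" "s \<in> srcs P \<Longrightarrow> A s \<noteq> {}"
  using dc by (auto simp: dcode_def)

lemma dc_link: "e \<in> links P \<Longrightarrow> x \<in> XS P A \<Longrightarrow> x' \<in> XS P A \<Longrightarrow>
    (\<forall>i\<in>in_link P e. vl F x i = vl F x' i) \<Longrightarrow> F x e = F x' e"
  using dc unfolding dcode_def by blast

lemma dc_dec: "s \<in> srcs P \<Longrightarrow> u \<in> dest P s \<Longrightarrow> x \<in> XS P A \<Longrightarrow> x' \<in> XS P A \<Longrightarrow>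
    (\<forall>i\<in>in_node P u. vl F x i = vl F x' i) \<Longrightarrow> x s = x' s"
  using dc unfolding dcode_def by blast

lemma set_Pi: "set_pmf (Pi_pmf (srcs P) 0 (\<lambda>s. pmf_of_set (A s))) = XS P A"
  using finS dc_A by (auto simp: set_Pi_pmf XS_def o_def PiE_dflt_def)

lemma finite_XS: "finite (XS P A)"
  unfolding XS_def using finS dc_A by (intro finite_PiE_dflt) auto

lemma set_dpmf: "set_pmf (dpmf P A F) = vl F ` XS P A"
  by (simp add: dpmf_def set_Pi)

lemma marg_dpmf: "s \<in> srcs P \<Longrightarrow> marg (dpmf P A F) (Inl s) = pmf_of_set (A s)"
  by (simp add: marg_def dpmf_def pmf.map_comp o_def vl_def Pi_pmf_component[OF finS])

lemma SP_dpmf_Inl: "s \<in> srcs P \<Longrightarrow> SP (dpmf P A F) (Inl s) = A s"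
  using dc_A by (simp add: SP_def marg_dpmf)

lemma SP_dpmf_Inr: "SP (dpmf P A F) (Inr e) = LV P A F e"
  by (simp add: SP_def marg_def dpmf_def pmf.map_comp o_def vl_def set_Pi LV_def)

lemma dpmf_fd:
  assumes "\<And>x x'. x \<in> XS P A \<Longrightarrow> x' \<in> XS P A \<Longrightarrow> (\<forall>i\<in>I. vl F x i = vl F x' i) \<Longrightarrow> vl F x j = vl F x' j"
  shows "jent (dpmf P A F) (I \<union> {j}) - jent (dpmf P A F) I = 0"
proof -
  have "jent (dpmf P A F) (I \<union> {j}) = jent (dpmf P A F) I"
  proof (rule jent_fd_zero)
    fix y y' assume y: "y \<in> set_pmf (dpmf P A F)" and y': "y' \<in> set_pmf (dpmf P A F)" and e: "rst I y = rst I y'"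
    obtain x where x: "x \<in> XS P A" "y = vl F x" using y by (auto simp: set_dpmf)
    obtain x' where x': "x' \<in> XS P A" "y' = vl F x'" using y' by (auto simp: set_dpmf)
    have "\<forall>i\<in>I. vl F x i = vl F x' i"
    proof
      fix i assume "i \<in> I"
      have "rst I y i = rst I y' i" using e by simp
      then show "vl F x i = vl F x' i" using \<open>i \<in> I\<close> x x' by (simp add: rst_def)
    qed
    then have "vl F x j = vl F x' j" using assms x x' by blast
    then show "rst {j} y = rst {j} y'" using x x' by (simp add: rst_def fun_eq_iff)
  qed
  then show ?thesis by simp
qed

lemma dpmf_indep:
  "pmf (map_pmf (rst (Inl ` srcs P)) (dpmf P A F)) (rst (Inl ` srcs P) x) =
      (\<Prod>s\<in>srcs P. pmf (marg (dpmf P A F) (Inl s)) (x (Inl s)))"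
proof -
  define W where "W y = rst (Inl ` srcs P) (vl F y)" for y :: "'s \<Rightarrow> nat"
  define T where "T = {y :: 's \<Rightarrow> nat. \<forall>s. s \<notin> srcs P \<longrightarrow> y s = 0}"
  define x0 where "x0 s = (if s \<in> srcs P then x (Inl s) else 0)" for s
  have injW: "inj_on W T"
  proof (rule inj_onI)
    fix y y' assume yT: "y \<in> T" and yT': "y' \<in> T" and e: "W y = W y'"
    show "y = y'"
    proof
      fix s
      show "y s = y' s"
      proof (cases "s \<in> srcs P")
        case True
        have "W y (Inl s) = W y' (Inl s)" using e by simp
        then show ?thesis using True by (simp add: W_def rst_def vl_def)
      next
        case False then show ?thesis using yT yT' by (simp add: T_def)
      qed
    qed
  qed
  have W0: "W x0 = rst (Inl ` srcs P) x"
  proof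
    fix i show "W x0 i = rst (Inl ` srcs P) x i"
      by (cases i) (auto simp: W_def x0_def rst_def vl_def)
  qed
  have "map_pmf (rst (Inl ` srcs P)) (dpmf P A F) = map_pmf W (Pi_pmf (srcs P) 0 (\<lambda>s. pmf_of_set (A s)))"
    unfolding W_def[abs_def] by (simp add: dpmf_def pmf.map_comp o_def)
  then have "pmf (map_pmf (rst (Inl ` srcs P)) (dpmf P A F)) (rst (Inl ` srcs P) x)
      = pmf (Pi_pmf (srcs P) 0 (\<lambda>s. pmf_of_set (A s))) x0"
  proof -
    have "set_pmf (Pi_pmf (srcs P) 0 (\<lambda>s. pmf_of_set (A s))) \<subseteq> T"
      unfolding set_Pi XS_def PiE_dflt_def T_def by blast
    moreover have "x0 \<in> T" by (simp add: T_def x0_def)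
    ultimately show ?thesis
      using pmf_map_inj_on_super[OF injW, of "Pi_pmf (srcs P) 0 (\<lambda>s. pmf_of_set (A s))" x0] W0 \<open>map_pmf _ _ = _\<close>
      by simp
  qed
  also have "... = (\<Prod>s\<in>srcs P. pmf (pmf_of_set (A s)) (x0 s))"
    by (rule pmf_Pi'[OF finS]) (simp add: x0_def)
  also have "... = (\<Prod>s\<in>srcs P. pmf (marg (dpmf P A F) (Inl s)) (x (Inl s)))"
    by (intro prod.cong refl) (simp add: marg_dpmf x0_def)
  finally show "pmf (map_pmf (rst (Inl ` srcs P)) (dpmf P A F)) (rst (Inl ` srcs P) x) =
      (\<Prod>s\<in>srcs P. pmf (marg (dpmf P A F) (Inl s)) (x (Inl s)))" .
qed

lemma dpmf_network_code:
  assumes finL: "finite (links P)"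
  shows "network_code P (dpmf P A F)"
  unfolding network_code_def
proof (intro conjI ballI allI)
  fix f assume "f \<in> idx P"
  then show "finite (SP (dpmf P A F) f)"
  proof (cases f)
    case (Inl s)
    then have "s \<in> srcs P" using \<open>f \<in> idx P\<close> by (auto simp: idx_def)
    then show ?thesis using Inl by (simp add: SP_dpmf_Inl dc_A)
  next
    case (Inr e)
    then show ?thesis by (simp add: SP_dpmf_Inr LV_def finite_XS)
  qed
next
  fix s x assume s: "s \<in> srcs P" and x: "x \<in> SP (dpmf P A F) (Inl s)"
  then show "pmf (marg (dpmf P A F) (Inl s)) x = 1 / real (card (SP (dpmf P A F) (Inl s)))"
    using dc_A[OF s] by (simp add: marg_dpmf SP_dpmf_Inl)
next
  fix x :: "'s + 'e \<Rightarrow> nat"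
  show "pmf (map_pmf (rst (Inl ` srcs P)) (dpmf P A F)) (rst (Inl ` srcs P) x) =
      (\<Prod>s\<in>srcs P. pmf (marg (dpmf P A F) (Inl s)) (x (Inl s)))" by (rule dpmf_indep)
next
  fix e assume e: "e \<in> links P"
  show "jent (dpmf P A F) (in_link P e \<union> {Inr e}) - jent (dpmf P A F) (in_link P e) = 0"
  proof (rule dpmf_fd)
    fix x x' assume x1: "x \<in> XS P A" and x2: "x' \<in> XS P A" and ag: "\<forall>i\<in>in_link P e. vl F x i = vl F x' i"
    have "F x e = F x' e" by (rule dc_link[OF e x1 x2 ag])
    then show "vl F x (Inr e) = vl F x' (Inr e)" by (simp add: vl_def)
  qed
qed

lemma dpmf_decode:
  assumes "s \<in> srcs P" "u \<in> dest P s"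
  shows "jent (dpmf P A F) ({Inl s} \<union> in_node P u) - jent (dpmf P A F) (in_node P u) = 0"
proof -
  have "jent (dpmf P A F) (in_node P u \<union> {Inl s}) - jent (dpmf P A F) (in_node P u) = 0"
  proof (rule dpmf_fd)
    fix x x' assume x1: "x \<in> XS P A" and x2: "x' \<in> XS P A" and ag: "\<forall>i\<in>in_node P u. vl F x i = vl F x' i"
    have "x s = x' s" by (rule dc_dec[OF assms x1 x2 ag])
    then show "vl F x (Inl s) = vl F x' (Inl s)" by (simp add: vl_def)
  qed
  then show ?thesis by (simp add: Un_commute)
qed

end

lemma extract_dcode:
  fixes P :: "('v, 'e, 's) problem" and Q :: "('s + 'e \<Rightarrow> nat) pmf"
  assumes valid: "valid_problem P" and nc: "network_code P Q"
    and dec: "\<forall>s\<in>srcs P. \<forall>u\<in>dest P s. jent Q ({Inl s} \<union> in_node P u) - jent Q (in_node P u) = 0"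
  shows "\<exists>F. dcode P (\<lambda>s. SP Q (Inl s)) F \<and> (\<forall>e\<in>links P. LV P (\<lambda>s. SP Q (Inl s)) F e \<subseteq> SP Q (Inr e))"
proof -
  define A where "A s = SP Q (Inl s)" for s
  have finidx: "finite (idx P)" using valid by (simp add: valid_problem_def idx_def)
  have finSP: "\<And>i. i \<in> idx P \<Longrightarrow> finite (SP Q i)" using nc by (simp add: network_code_def)
  have indep: "\<And>x. pmf (map_pmf (rst (Inl ` srcs P)) Q) (rst (Inl ` srcs P) x)
           = (\<Prod>s\<in>srcs P. pmf (marg Q (Inl s)) (x (Inl s)))" using nc by (simp add: network_code_def)
  have ct: "\<And>e. e \<in> links P \<Longrightarrow> jent Q (in_link P e \<union> {Inr e}) = jent Q (in_link P e)"
    using nc by (simp add: network_code_def)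
  have ex: "\<exists>y. y \<in> set_pmf Q \<and> (\<forall>s\<in>srcs P. y (Inl s) = x s)" if x: "x \<in> XS P A" for x
  proof -
    define x' where "x' i = (case i of Inl s \<Rightarrow> x s | Inr _ \<Rightarrow> 0)" for i :: "'s + 'e"
    have "(\<Prod>s\<in>srcs P. pmf (marg Q (Inl s)) (x' (Inl s))) > 0"
    proof (rule prod_pos)
      fix s assume s: "s \<in> srcs P"
      then have "x s \<in> A s" using x by (simp add: XS_def PiE_dflt_def)
      then have "x s \<in> set_pmf (marg Q (Inl s))" by (simp add: A_def SP_def)
      then show "pmf (marg Q (Inl s)) (x' (Inl s)) > 0" by (simp add: x'_def pmf_positive)
    qed
    then have "pmf (map_pmf (rst (Inl ` srcs P)) Q) (rst (Inl ` srcs P) x') > 0" using indep by simp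
    then have "rst (Inl ` srcs P) x' \<in> set_pmf (map_pmf (rst (Inl ` srcs P)) Q)"
      unfolding set_pmf_iff by linarith
    then obtain y where y: "y \<in> set_pmf Q" "rst (Inl ` srcs P) y = rst (Inl ` srcs P) x'" by auto
    have "\<forall>s\<in>srcs P. y (Inl s) = x s"
    proof
      fix s assume "s \<in> srcs P"
      have "rst (Inl ` srcs P) y (Inl s) = rst (Inl ` srcs P) x' (Inl s)" using y(2) by simp
      then show "y (Inl s) = x s" using \<open>s \<in> srcs P\<close> by (simp add: rst_def x'_def)
    qed
    then show ?thesis using y(1) by blast
  qed
  define Y where "Y x = (SOME y. y \<in> set_pmf Q \<and> (\<forall>s\<in>srcs P. y (Inl s) = x s))" for x
  have Y: "Y x \<in> set_pmf Q" "\<And>s. s \<in> srcs P \<Longrightarrow> Y x (Inl s) = x s" if "x \<in> XS P A" for x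
    using someI_ex[OF ex[OF that]] by (auto simp: Y_def)
  define F where "F x e = Y x (Inr e)" for x e
  have vlY: "vl F x i = Y x i" if "x \<in> XS P A" "i \<in> idx P" for x i
    using that Y by (cases i) (auto simp: vl_def F_def idx_def)
  have agree: "rst I (Y x) = rst I (Y x')"
    if "x \<in> XS P A" "x' \<in> XS P A" "I \<subseteq> idx P" "\<forall>i\<in>I. vl F x i = vl F x' i" for x x' I
  proof
    fix i show "rst I (Y x) i = rst I (Y x') i"
      using that vlY[of x i] vlY[of x' i] by (auto simp: rst_def)
  qed
  have inl: "in_link P e \<subseteq> idx P" for e by (auto simp: in_link_def idx_def)
  have inn: "in_node P u \<subseteq> idx P" for u by (auto simp: in_node_def idx_def)
  have dc: "dcode P A F" unfolding dcode_def
  proof (intro conjI ballI impI)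
    fix s assume s: "s \<in> srcs P"
    show "finite (A s)" using finSP[of "Inl s"] s by (simp add: A_def idx_def)
    show "A s \<noteq> {}" by (simp add: A_def SP_def set_pmf_not_empty)
  next
    fix e x x' assume e: "e \<in> links P" and x: "x \<in> XS P A" and x': "x' \<in> XS P A"
      and ag: "\<forall>i\<in>in_link P e. vl F x i = vl F x' i"
    have r: "rst (in_link P e) (Y x) = rst (in_link P e) (Y x')" by (rule agree[OF x x' inl ag])
    have fin: "finite (in_link P e \<union> {Inr e})" using finite_subset[OF inl[of e] finidx] by simp
    have "rst {Inr e} (Y x) = rst {Inr e} (Y x')"
    proof (rule jent_zero_fd[OF fin _ ct[OF e] Y(1)[OF x] Y(1)[OF x'] r])
      fix i assume "i \<in> in_link P e \<union> {Inr e}"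
      then show "finite (SP Q i)" using inl[of e] e by (intro finSP) (auto simp: idx_def)
    qed
    then have "Y x (Inr e) = Y x' (Inr e)" by (metis rst_def singletonI)
    then show "F x e = F x' e" by (simp add: F_def)
  next
    fix s u x x' assume s: "s \<in> srcs P" and u: "u \<in> dest P s" and x: "x \<in> XS P A" and x': "x' \<in> XS P A"
      and ag: "\<forall>i\<in>in_node P u. vl F x i = vl F x' i"
    have r: "rst (in_node P u) (Y x) = rst (in_node P u) (Y x')" by (rule agree[OF x x' inn ag])
    have fin: "finite (in_node P u \<union> {Inl s})" using finite_subset[OF inn[of u] finidx] by simp
    have d: "jent Q (in_node P u \<union> {Inl s}) = jent Q (in_node P u)" using dec s u by (simp add: Un_commute)
    have "rst {Inl s} (Y x) = rst {Inl s} (Y x')"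
    proof (rule jent_zero_fd[OF fin _ d Y(1)[OF x] Y(1)[OF x'] r])
      fix i assume "i \<in> in_node P u \<union> {Inl s}"
      then show "finite (SP Q i)" using inn[of u] s by (intro finSP) (auto simp: idx_def)
    qed
    then have "Y x (Inl s) = Y x' (Inl s)" by (metis rst_def singletonI)
    then show "x s = x' s" using Y(2)[OF x s] Y(2)[OF x' s] by simp
  qed
  have "LV P A F e \<subseteq> SP Q (Inr e)" for e
    using Y(1) by (auto simp: LV_def F_def SP_def marg_def)
  then show ?thesis using dc unfolding A_def by blast
qed

definition prodA :: "nat \<Rightarrow> ('s \<Rightarrow> nat set) \<Rightarrow> 's \<Rightarrow> nat set" where
  "prodA k A s = list_encode ` {xs. set xs \<subseteq> A s \<and> length xs = k}"

definition compj :: "('v, 'e, 's) problem \<Rightarrow> nat \<Rightarrow> ('s \<Rightarrow> nat) \<Rightarrow> 's \<Rightarrow> nat" where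
  "compj P j x = (\<lambda>s. if s \<in> srcs P then list_decode (x s) ! j else 0)"

definition prodF :: "('v, 'e, 's) problem \<Rightarrow> nat \<Rightarrow> (('s \<Rightarrow> nat) \<Rightarrow> 'e \<Rightarrow> nat) \<Rightarrow> ('s \<Rightarrow> nat) \<Rightarrow> 'e \<Rightarrow> nat" where
  "prodF P k F x e = list_encode (map (\<lambda>j. F (compj P j x) e) [0..<k])"

lemma prodA_mem: "v \<in> prodA k A s \<longleftrightarrow> set (list_decode v) \<subseteq> A s \<and> length (list_decode v) = k"
proof
  assume "v \<in> prodA k A s"
  then obtain xs where "set xs \<subseteq> A s" "length xs = k" "v = list_encode xs" by (auto simp: prodA_def)
  then show "set (list_decode v) \<subseteq> A s \<and> length (list_decode v) = k" by simp
next
  assume a: "set (list_decode v) \<subseteq> A s \<and> length (list_decode v) = k"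
  have "v = list_encode (list_decode v)" by simp
  then show "v \<in> prodA k A s" unfolding prodA_def using a by blast
qed

lemma compj_in:
  assumes "x \<in> XS P (prodA k A)" "j < k" shows "compj P j x \<in> XS P A"
proof -
  have "\<forall>s. (s \<in> srcs P \<longrightarrow> x s \<in> prodA k A s) \<and> (s \<notin> srcs P \<longrightarrow> x s = 0)"
    using assms(1) unfolding XS_def PiE_dflt_def by blast
  then have "\<forall>s. s \<in> srcs P \<longrightarrow> list_decode (x s) ! j \<in> A s"
    using assms(2) unfolding prodA_mem by (metis nth_mem subsetD)
  then show ?thesis unfolding XS_def PiE_dflt_def compj_def by simp
qed

context
  fixes P :: "('v, 'e, 's) problem" and A F
  assumes finS: "finite (srcs P)" and dc: "dcode P A F"
begin

lemma prod_dcode: "dcode P (prodA k A) (prodF P k F)"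
  unfolding dcode_def
proof (intro conjI ballI impI)
  fix s assume s: "s \<in> srcs P"
  have fA: "finite (A s)" "A s \<noteq> {}" using dc_A[OF finS dc s] by auto
  show "finite (prodA k A s)" unfolding prodA_def using fA by (simp add: finite_lists_length_eq)
  obtain a where "a \<in> A s" using fA by auto
  then have "list_encode (replicate k a) \<in> prodA k A s" unfolding prodA_def by auto
  then show "prodA k A s \<noteq> {}" by auto
next
  fix e x x' assume e: "e \<in> links P" and x: "x \<in> XS P (prodA k A)" and x': "x' \<in> XS P (prodA k A)"
    and ag: "\<forall>i\<in>in_link P e. vl (prodF P k F) x i = vl (prodF P k F) x' i"
  have "F (compj P j x) e = F (compj P j x') e" if j: "j < k" for j
  proof (rule dc_link[OF finS dc e compj_in[OF x j] compj_in[OF x' j]], intro ballI)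
    fix i assume i: "i \<in> in_link P e"
    show "vl F (compj P j x) i = vl F (compj P j x') i"
    proof (cases i)
      case (Inl s)
      then have "x s = x' s" using ag i by (auto simp: vl_def)
      then show ?thesis using Inl by (simp add: vl_def compj_def)
    next
      case (Inr f)
      then have "prodF P k F x f = prodF P k F x' f" using ag i by (auto simp: vl_def)
      then have "map (\<lambda>j. F (compj P j x) f) [0..<k] = map (\<lambda>j. F (compj P j x') f) [0..<k]"
        unfolding prodF_def using inj_list_encode by (metis list_encode_inverse)
      then have "F (compj P j x) f = F (compj P j x') f" using j by (metis (no_types, lifting) map_eq_conv atLeastLessThan_iff set_upt zero_le)
      then show ?thesis using Inr by (simp add: vl_def)
    qed
  qed
  then show "prodF P k F x e = prodF P k F x' e" unfolding prodF_def by (intro arg_cong[where f = list_encode] map_cong) auto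
next
  fix s u x x' assume s: "s \<in> srcs P" and u: "u \<in> dest P s" and x: "x \<in> XS P (prodA k A)" and x': "x' \<in> XS P (prodA k A)"
    and ag: "\<forall>i\<in>in_node P u. vl (prodF P k F) x i = vl (prodF P k F) x' i"
  have cj: "compj P j x s = compj P j x' s" if j: "j < k" for j
  proof (rule dc_dec[OF finS dc s u compj_in[OF x j] compj_in[OF x' j]], intro ballI)
    fix i assume i: "i \<in> in_node P u"
    show "vl F (compj P j x) i = vl F (compj P j x') i"
    proof (cases i)
      case (Inl s)
      then have "x s = x' s" using ag i by (auto simp: vl_def)
      then show ?thesis using Inl by (simp add: vl_def compj_def)
    next
      case (Inr f)
      then have "prodF P k F x f = prodF P k F x' f" using ag i by (auto simp: vl_def)
      then have "map (\<lambda>j. F (compj P j x) f) [0..<k] = map (\<lambda>j. F (compj P j x') f) [0..<k]"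
        unfolding prodF_def using inj_list_encode by (metis list_encode_inverse)
      then have "F (compj P j x) f = F (compj P j x') f" using j by (metis (no_types, lifting) map_eq_conv atLeastLessThan_iff set_upt zero_le)
      then show ?thesis using Inr by (simp add: vl_def)
    qed
  qed
  have l1: "length (list_decode (x s)) = k" and l2: "length (list_decode (x' s)) = k"
    using x x' s by (auto simp: XS_def PiE_dflt_def prodA_mem)
  have "list_decode (x s) = list_decode (x' s)"
  proof (rule nth_equalityI)
    show "length (list_decode (x s)) = length (list_decode (x' s))" using l1 l2 by simp
    fix j assume "j < length (list_decode (x s))"
    then show "list_decode (x s) ! j = list_decode (x' s) ! j" using cj[of j] l1 s by (simp add: compj_def)
  qed
  then show "x s = x' s" by (metis list_decode_inverse)
qed

lemma card_prodA: "s \<in> srcs P \<Longrightarrow> card (prodA k A s) = card (A s) ^ k"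
  unfolding prodA_def using dc_A[OF finS dc]
  by (subst card_image) (auto intro: inj_on_subset[OF inj_list_encode] simp: card_lists_length_eq)

lemma card_LV_prod: "card (LV P (prodA k A) (prodF P k F) e) \<le> card (LV P A F e) ^ k"
proof -
  have finLV: "finite (LV P A F e)" unfolding LV_def using finite_XS[OF finS dc] by simp
  have "LV P (prodA k A) (prodF P k F) e \<subseteq> list_encode ` {xs. set xs \<subseteq> LV P A F e \<and> length xs = k}"
  proof
    fix v assume "v \<in> LV P (prodA k A) (prodF P k F) e"
    then obtain x where x: "x \<in> XS P (prodA k A)" "v = prodF P k F x e" by (auto simp: LV_def)
    have "set (map (\<lambda>j. F (compj P j x) e) [0..<k]) \<subseteq> LV P A F e"
      using compj_in[OF x(1)] by (auto simp: LV_def)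
    then show "v \<in> list_encode ` {xs. set xs \<subseteq> LV P A F e \<and> length xs = k}"
      using x(2) unfolding prodF_def by auto
  qed
  then have "card (LV P (prodA k A) (prodF P k F) e) \<le> card (list_encode ` {xs. set xs \<subseteq> LV P A F e \<and> length xs = k})"
    using finLV by (intro card_mono) (auto simp: finite_lists_length_eq)
  also have "... \<le> card {xs. set xs \<subseteq> LV P A F e \<and> length xs = k}" by (rule card_image_le) (simp add: finite_lists_length_eq finLV)
  also have "... = card (LV P A F e) ^ k" using finLV by (simp add: card_lists_length_eq)
  finally show ?thesis .
qed

end

lemma modcancel:
  fixes a b b' M :: nat
  assumes "(a + b) mod M = (a + b') mod M" "b < M" "b' < M"
  shows "b = b'"
proof -
  have "(int a + int b) mod int M = (int a + int b') mod int M" using assms(1) by (metis of_nat_add zmod_int)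
  then have "int M dvd (int a + int b) - (int a + int b')" by (simp add: mod_eq_dvd_iff)
  then have "int M dvd int b - int b'" by simp
  then obtain k where k: "int b - int b' = int M * k" by (auto elim: dvdE)
  consider "k = 0" | "k \<ge> 1" | "k \<le> -1" by linarith
  then show ?thesis
  proof cases
    case 1 then show ?thesis using k by simp
  next
    case 2
    then have "int M * k \<ge> int M * 1" by (intro mult_left_mono) auto
    then show ?thesis using k assms(2,3) by linarith
  next
    case 3
    then have "int M * k \<le> int M * (-1)" by (intro mult_left_mono) auto
    then show ?thesis using k assms(2,3) by linarith
  qed
qed

fun bndf :: "('s \<Rightarrow> nat) \<Rightarrow> ('e \<Rightarrow> nat) \<Rightarrow> ('v, 's, 'e) dlink \<Rightarrow> nat" where
  "bndf M K (OldL e) = K e"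
| "bndf M K (La s) = M s"
| "bndf M K (Lb s) = M s"
| "bndf M K (Lc s) = M s"
| "bndf M K (Ld s u) = M s"

lemma dag_code:
  fixes P :: "('v, 'e, 's) problem" and A F and M :: "'s \<Rightarrow> nat"
  assumes valid: "valid_problem P" and dc: "dcode P A F"
    and M: "\<And>s. s \<in> srcs P \<Longrightarrow> 1 \<le> M s \<and> M s \<le> card (A s)"
  shows "\<exists>Q. network_code (Pdag P) Q \<and>
     (\<forall>s\<in>srcs (Pdag P). \<forall>u\<in>dest (Pdag P) s. jent Q ({Inl s} \<union> in_node (Pdag P) u) - jent Q (in_node (Pdag P) u) = 0) \<and>
     (\<forall>x. card (SP Q (Inl x)) = (\<Prod>s\<in>srcs P. M s)) \<and>
     (\<forall>lk\<in>links (Pdag P). 1 \<le> card (SP Q (Inr lk)) \<and> card (SP Q (Inr lk)) \<le> bndf M (\<lambda>e. card (LV P A F e)) lk)"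
proof -
  have finS: "finite (srcs P)" using valid by (simp add: valid_problem_def)
  have finA: "\<And>s. s \<in> srcs P \<Longrightarrow> finite (A s)" using dc_A[OF finS dc] by blast
  have "\<exists>f. f ` {..<M s} \<subseteq> A s \<and> inj_on f {..<M s}" if "s \<in> srcs P" for s
    using card_le_inj[of "{..<M s}" "A s"] M[OF that] finA[OF that] by simp
  then obtain \<sigma> where \<sigma>: "\<And>s. s \<in> srcs P \<Longrightarrow> \<sigma> s ` {..<M s} \<subseteq> A s \<and> inj_on (\<sigma> s) {..<M s}" by metis
  define MM where "MM = (\<Prod>s\<in>srcs P. M s)"
  define PP where "PP = PiE_dflt (srcs P) 0 (\<lambda>s. {..<M s})"
  have cardPP: "card PP = MM" unfolding PP_def MM_def using finS by (simp add: card_PiE_dflt)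
  have finPP: "finite PP" unfolding PP_def using finS by (intro finite_PiE_dflt) auto
  obtain D where D: "bij_betw D {0..<MM} PP" using ex_bij_betw_nat_finite[OF finPP] cardPP by metis
  have MMpos: "MM \<ge> 1" unfolding MM_def using M by (metis One_nat_def prod_ge_1)
  define Xv where "Xv xx = D (xx Src1)" for xx :: "dsrc \<Rightarrow> nat"
  define Yv where "Yv xx = D (xx Src2)" for xx :: "dsrc \<Rightarrow> nat"
  define av where "av xx s = (Xv xx s + Yv xx s) mod M s" for xx s
  define xP where "xP xx = (\<lambda>s. if s \<in> srcs P then \<sigma> s (av xx s) else 0)" for xx
  define Fd where "Fd xx (lk :: ('v, 's, 'e) dlink) = (case lk of OldL e \<Rightarrow> F (xP xx) e | La s \<Rightarrow> av xx s | Lb s \<Rightarrow> Xv xx s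
      | Lc s \<Rightarrow> Yv xx s | Ld s u \<Rightarrow> av xx s)" for xx lk
  define Ad where "Ad = (\<lambda>_ :: dsrc. {..<MM})"
  have XSd: "xx Src1 < MM" "xx Src2 < MM" if "xx \<in> XS (Pdag P) Ad" for xx
    using that by (auto simp: XS_def PiE_dflt_def Ad_def)
  have XvPP: "Xv xx \<in> PP" "Yv xx \<in> PP" if "xx \<in> XS (Pdag P) Ad" for xx
    using XSd[OF that] D by (auto simp: Xv_def Yv_def bij_betw_def)
  have Xlt: "Xv xx s < M s" "Yv xx s < M s" if "xx \<in> XS (Pdag P) Ad" "s \<in> srcs P" for xx s
    using XvPP[OF that(1)] that(2) by (auto simp: PP_def PiE_dflt_def)
  have avlt: "av xx s < M s" if "s \<in> srcs P" for xx s
    using M[OF that] by (simp add: av_def)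
  have xPin: "xP xx \<in> XS P A" for xx
  proof -
    have "\<sigma> s (av xx s) \<in> A s" if "s \<in> srcs P" for s
      using \<sigma>[OF that] avlt[OF that, of xx] by blast
    then show ?thesis by (auto simp: xP_def XS_def PiE_dflt_def)
  qed
  have Xveq: "xx Src1 = xx' Src1" if "xx \<in> XS (Pdag P) Ad" "xx' \<in> XS (Pdag P) Ad" "\<forall>s\<in>srcs P. Xv xx s = Xv xx' s" for xx xx'
  proof -
    have "Xv xx = Xv xx'"
    proof
      fix s show "Xv xx s = Xv xx' s"
        using that XvPP[OF that(1)] XvPP[OF that(2)] by (cases "s \<in> srcs P") (auto simp: PP_def PiE_dflt_def)
    qed
    then show ?thesis using D XSd[OF that(1)] XSd[OF that(2)] unfolding Xv_def bij_betw_def inj_on_def by auto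
  qed
  have Yveq: "xx Src2 = xx' Src2" if "xx \<in> XS (Pdag P) Ad" "xx' \<in> XS (Pdag P) Ad" "\<forall>s\<in>srcs P. Yv xx s = Yv xx' s" for xx xx'
  proof -
    have "Yv xx = Yv xx'"
    proof
      fix s show "Yv xx s = Yv xx' s"
        using that XvPP[OF that(1)] XvPP[OF that(2)] by (cases "s \<in> srcs P") (auto simp: PP_def PiE_dflt_def)
    qed
    then show ?thesis using D XSd[OF that(1)] XSd[OF that(2)] unfolding Yv_def bij_betw_def inj_on_def by auto
  qed
  have Xfrom: "Xv xx s = Xv xx' s" if "xx \<in> XS (Pdag P) Ad" "xx' \<in> XS (Pdag P) Ad" "s \<in> srcs P"
      "av xx s = av xx' s" "Yv xx s = Yv xx' s" for xx xx' s
  proof (rule modcancel)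
    show "(Yv xx s + Xv xx s) mod M s = (Yv xx s + Xv xx' s) mod M s"
      using that(4,5) by (simp add: av_def add.commute)
  qed (use Xlt that in auto)
  have Yfrom: "Yv xx s = Yv xx' s" if "xx \<in> XS (Pdag P) Ad" "xx' \<in> XS (Pdag P) Ad" "s \<in> srcs P"
      "av xx s = av xx' s" "Xv xx s = Xv xx' s" for xx xx' s
  proof (rule modcancel)
    show "(Xv xx s + Yv xx s) mod M s = (Xv xx s + Yv xx' s) mod M s"
      using that(4,5) by (simp add: av_def)
  qed (use Xlt that in auto)
  have rho_ag: "\<forall>i\<in>I. vl F (xP xx) i = vl F (xP xx') i"
    if "\<forall>i\<in>rho1 ` I. vl Fd xx i = vl Fd xx' i" "I \<subseteq> idx P" for xx xx' I
  proof
    fix i assume i: "i \<in> I"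
    have e: "vl Fd xx (rho1 i) = vl Fd xx' (rho1 i)" using that(1) i by blast
    show "vl F (xP xx) i = vl F (xP xx') i"
    proof (cases i)
      case (Inl j)
      then have "av xx j = av xx' j" using e by (simp add: rho1_def vl_def Fd_def)
      then show ?thesis using Inl by (simp add: vl_def xP_def)
    next
      case (Inr f)
      then show ?thesis using e by (simp add: rho1_def vl_def Fd_def)
    qed
  qed
  have inl: "in_link P e \<subseteq> idx P" for e by (auto simp: in_link_def idx_def)
  have inn: "in_node P u \<subseteq> idx P" for u by (auto simp: in_node_def idx_def)
  have dcd: "dcode (Pdag P) Ad Fd" unfolding dcode_def
  proof (intro conjI ballI impI)
    fix x :: dsrc assume "x \<in> srcs (Pdag P)"
    show "finite (Ad x)" by (simp add: Ad_def)
    have "0 \<in> Ad x" using MMpos by (simp add: Ad_def)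
    then show "Ad x \<noteq> {}" by blast
  next
    fix lk xx xx' assume lk: "lk \<in> links (Pdag P)" and xx: "xx \<in> XS (Pdag P) Ad" and xx': "xx' \<in> XS (Pdag P) Ad"
      and ag: "\<forall>i\<in>in_link (Pdag P) lk. vl Fd xx i = vl Fd xx' i"
    show "Fd xx lk = Fd xx' lk"
    proof (cases lk)
      case (OldL e)
      then have e: "e \<in> links P" using lk by simp
      have "\<forall>i\<in>in_link P e. vl F (xP xx) i = vl F (xP xx') i"
        using ag OldL by (intro rho_ag[OF _ inl]) (simp add: rho1_in_link)
      then have "F (xP xx) e = F (xP xx') e" by (rule dc_link[OF finS dc e xPin xPin])
      then show ?thesis using OldL by (simp add: Fd_def)
    next
      case (La s)
      have "xx Src1 = xx' Src1" "xx Src2 = xx' Src2" using ag La by (auto simp: in_link_La vl_def)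
      then show ?thesis using La by (simp add: Fd_def av_def Xv_def Yv_def)
    next
      case (Lb s)
      have "xx Src1 = xx' Src1" using ag Lb by (auto simp: in_link_Lb vl_def)
      then show ?thesis using Lb by (simp add: Fd_def Xv_def)
    next
      case (Lc s)
      then have s: "s \<in> srcs P" using lk by simp
      have "av xx s = av xx' s" "Xv xx s = Xv xx' s" using ag Lc s by (auto simp: in_link_Lc vl_def Fd_def)
      then show ?thesis using Lc Yfrom[OF xx xx' s] by (simp add: Fd_def)
    next
      case (Ld s u)
      then have s: "s \<in> srcs P" and u: "u \<in> dest P s" using lk by auto
      have "\<forall>i\<in>in_node P u. vl F (xP xx) i = vl F (xP xx') i"
        using ag Ld by (intro rho_ag[OF _ inn]) (simp add: rho1_in_node in_link_Ld)
      then have "xP xx s = xP xx' s" by (rule dc_dec[OF finS dc s u xPin xPin])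
      then have "\<sigma> s (av xx s) = \<sigma> s (av xx' s)" using s by (simp add: xP_def)
      then have "av xx s = av xx' s" using \<sigma>[OF s] avlt[OF s] by (meson inj_onD lessThan_iff)
      then show ?thesis using Ld by (simp add: Fd_def)
    qed
  next
    fix x u xx xx' assume x: "x \<in> srcs (Pdag P)" and u: "u \<in> dest (Pdag P) x"
      and xx: "xx \<in> XS (Pdag P) Ad" and xx': "xx' \<in> XS (Pdag P) Ad"
      and ag: "\<forall>i\<in>in_node (Pdag P) u. vl Fd xx i = vl Fd xx' i"
    have getb: "Xv xx j = Xv xx' j" if "Inr (Lb j) \<in> in_node (Pdag P) u" for j
      using ag that by (auto simp: vl_def Fd_def)
    have getc: "Yv xx j = Yv xx' j" if "Inr (Lc j) \<in> in_node (Pdag P) u" for j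
      using ag that by (auto simp: vl_def Fd_def)
    have geta: "av xx j = av xx' j" if "Inr (La j) \<in> in_node (Pdag P) u" for j
      using ag that by (auto simp: vl_def Fd_def)
    have getd: "av xx j = av xx' j" if "Inr (Ld j v) \<in> in_node (Pdag P) u" for j v
      using ag that by (auto simp: vl_def Fd_def)
    consider (s1) "x = Src1" | (s2) "x = Src2" using x by auto
    then show "xx x = xx' x"
    proof cases
      case s1
      have "\<forall>s\<in>srcs P. Xv xx s = Xv xx' s"
      proof -
        consider (tau) s0 u0 where "u = Tau s0 u0" "s0 \<in> srcs P" "u0 \<in> dest P s0" | (eta) "u = Eta" | (etas) "u = EtaStar" | (psi) "u = Psi"
          using u s1 by (auto simp: Pdag_dest1)
        then show ?thesis
        proof cases
          case tau
          show ?thesis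
          proof
            fix s assume s: "s \<in> srcs P"
            show "Xv xx s = Xv xx' s"
            proof (cases "s = s0")
              case True
              have "av xx s = av xx' s" using getd[of s u0] tau True by (simp add: in_node_Tau)
              moreover have "Yv xx s = Yv xx' s" using getc[of s] tau True by (simp add: in_node_Tau)
              ultimately show ?thesis using Xfrom[OF xx xx' s] by simp
            next
              case False
              then show ?thesis using getb[of s] tau s by (simp add: in_node_Tau)
            qed
          qed
        next
          case eta then show ?thesis using getb by (simp add: in_node_Eta)
        next
          case etas
          show ?thesis
          proof
            fix s assume s: "s \<in> srcs P"
            have "av xx s = av xx' s" "Yv xx s = Yv xx' s" using geta[of s] getc[of s] etas s by (simp_all add: in_node_EtaStar)
            then show "Xv xx s = Xv xx' s" using Xfrom[OF xx xx' s] by simp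
          qed
        next
          case psi then show ?thesis using getb by (simp add: in_node_Psi)
        qed
      qed
      then show ?thesis using Xveq[OF xx xx'] s1 by simp
    next
      case s2
      have "u = Eta \<or> u = EtaStar" using u s2 by (simp add: Pdag_dest2)
      then have "\<forall>s\<in>srcs P. Yv xx s = Yv xx' s" using getc by (auto simp: in_node_Eta in_node_EtaStar)
      then show ?thesis using Yveq[OF xx xx'] s2 by simp
    qed
  qed
  have finSd: "finite (srcs (Pdag P))" by simp
  have finLd: "finite (links (Pdag P))" by (rule finite_links_Pdag[OF valid])
  define Q where "Q = dpmf (Pdag P) Ad Fd"
  have nc: "network_code (Pdag P) Q" unfolding Q_def by (rule dpmf_network_code[OF finSd dcd finLd])
  have dec: "\<forall>s\<in>srcs (Pdag P). \<forall>u\<in>dest (Pdag P) s. jent Q ({Inl s} \<union> in_node (Pdag P) u) - jent Q (in_node (Pdag P) u) = 0"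
    unfolding Q_def using dpmf_decode[OF finSd dcd] by blast
  have cs: "card (SP Q (Inl x)) = MM" for x
  proof -
    have "x \<in> srcs (Pdag P)" by (cases x) auto
    from SP_dpmf_Inl[OF finSd dcd this] show ?thesis by (simp add: Q_def Ad_def)
  qed
  have LVne: "LV (Pdag P) Ad Fd lk \<noteq> {}" for lk
  proof -
    have "(\<lambda>_. 0) \<in> XS (Pdag P) Ad" using MMpos by (auto simp: XS_def Ad_def PiE_dflt_def)
    then have "XS (Pdag P) Ad \<noteq> {}" by blast
    then show ?thesis by (simp add: LV_def)
  qed
  have LVfin: "finite (LV (Pdag P) Ad Fd lk)" for lk using finite_XS[OF finSd dcd] by (simp add: LV_def)
  have cl: "1 \<le> card (SP Q (Inr lk)) \<and> card (SP Q (Inr lk)) \<le> bndf M (\<lambda>e. card (LV P A F e)) lk"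
    if lk: "lk \<in> links (Pdag P)" for lk
  proof
    show "1 \<le> card (SP Q (Inr lk))" using LVne[of lk] LVfin[of lk]
      by (simp add: Q_def SP_dpmf_Inr[OF finSd dcd] Suc_le_eq card_gt_0_iff)
    have sub: "LV (Pdag P) Ad Fd lk \<subseteq> (case lk of OldL e \<Rightarrow> LV P A F e | La s \<Rightarrow> {..<M s} | Lb s \<Rightarrow> {..<M s}
       | Lc s \<Rightarrow> {..<M s} | Ld s u \<Rightarrow> {..<M s})"
    proof
      fix v assume "v \<in> LV (Pdag P) Ad Fd lk"
      then obtain xx where xx: "xx \<in> XS (Pdag P) Ad" "v = Fd xx lk" by (auto simp: LV_def)
      show "v \<in> (case lk of OldL e \<Rightarrow> LV P A F e | La s \<Rightarrow> {..<M s} | Lb s \<Rightarrow> {..<M s}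
       | Lc s \<Rightarrow> {..<M s} | Ld s u \<Rightarrow> {..<M s})"
        using lk xx xPin Xlt[OF xx(1)] avlt by (cases lk) (auto simp: Fd_def LV_def)
    qed
    have finLV: "finite (LV P A F e)" for e using finite_XS[OF finS dc] by (simp add: LV_def)
    have "card (LV (Pdag P) Ad Fd lk) \<le> bndf M (\<lambda>e. card (LV P A F e)) lk"
      using card_mono[OF _ sub] finLV by (cases lk) auto
    then show "card (SP Q (Inr lk)) \<le> bndf M (\<lambda>e. card (LV P A F e)) lk"
      by (simp add: Q_def SP_dpmf_Inr[OF finSd dcd])
  qed
  show ?thesis using nc dec cs cl by (intro exI[of _ Q]) (auto simp: MM_def)
qed

lemma log_prod_pos:
  fixes f :: "'a \<Rightarrow> real"
  assumes "finite S" "\<And>s. s \<in> S \<Longrightarrow> f s > 0"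
  shows "log 2 (\<Prod>s\<in>S. f s) = (\<Sum>s\<in>S. log 2 (f s))"
  using assms
proof (induction S rule: finite_induct)
  case empty then show ?case by simp
next
  case (insert x S)
  have "(\<Prod>s\<in>S. f s) > 0" using insert by (intro prod_pos) auto
  moreover have "f x > 0" using insert by simp
  ultimately have "log 2 (f x * (\<Prod>s\<in>S. f s)) = log 2 (f x) + log 2 (\<Prod>s\<in>S. f s)" by (simp add: log_mult)
  then show ?case using insert by simp
qed

lemma floor_pow_bounds:
  fixes a :: real
  assumes "a \<ge> 0"
  shows "1 \<le> nat \<lfloor>2 powr a\<rfloor>" "log 2 (real (nat \<lfloor>2 powr a\<rfloor>)) \<le> a" "a - 1 \<le> log 2 (real (nat \<lfloor>2 powr a\<rfloor>))"
proof -
  have z1: "2 powr a \<ge> 1" using assms by (simp add: ge_one_powr_ge_zero)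
  then have f1: "\<lfloor>2 powr a\<rfloor> \<ge> 1" by (simp add: le_floor_iff)
  then show "1 \<le> nat \<lfloor>2 powr a\<rfloor>" by linarith
  have r: "real (nat \<lfloor>2 powr a\<rfloor>) = of_int \<lfloor>2 powr a\<rfloor>" using f1 by simp
  have pos: "real (nat \<lfloor>2 powr a\<rfloor>) > 0" using f1 r by simp
  have "real (nat \<lfloor>2 powr a\<rfloor>) \<le> 2 powr a" using r by simp
  then have "log 2 (real (nat \<lfloor>2 powr a\<rfloor>)) \<le> log 2 (2 powr a)" using pos by (intro log_mono) auto
  then show "log 2 (real (nat \<lfloor>2 powr a\<rfloor>)) \<le> a" by simp
  have "2 powr a / 2 \<le> real (nat \<lfloor>2 powr a\<rfloor>)"
  proof (cases "2 powr a \<ge> 2")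
    case True
    have "2 powr a - 1 < of_int \<lfloor>2 powr a\<rfloor>" by linarith
    then show ?thesis using True r by linarith
  next
    case False
    then show ?thesis using f1 r by linarith
  qed
  then have "log 2 (2 powr a / 2) \<le> log 2 (real (nat \<lfloor>2 powr a\<rfloor>))" by (intro log_mono) auto
  moreover have "log 2 (2 powr a / 2) = a - 1" by (simp add: log_divide)
  ultimately show "a - 1 \<le> log 2 (real (nat \<lfloor>2 powr a\<rfloor>))" by simp
qed

lemma step_code:
  fixes P :: "('v, 'e, 's) problem"
  assumes valid: "valid_problem P" and nc: "network_code P Q"
    and dec: "\<forall>s\<in>srcs P. \<forall>u\<in>dest P s. jent Q ({Inl s} \<union> in_node P u) - jent Q (in_node P u) = 0"
    and Mv: "\<And>s. s \<in> srcs P \<Longrightarrow> 1 \<le> Mv s \<and> Mv s \<le> card (SP Q (Inl s)) ^ k"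
  shows "\<exists>Qd. network_code (Pdag P) Qd \<and>
     (\<forall>s\<in>srcs (Pdag P). \<forall>u\<in>dest (Pdag P) s. jent Qd ({Inl s} \<union> in_node (Pdag P) u) - jent Qd (in_node (Pdag P) u) = 0) \<and>
     (\<forall>x. card (SP Qd (Inl x)) = (\<Prod>s\<in>srcs P. Mv s)) \<and>
     (\<forall>lk\<in>links (Pdag P). 1 \<le> card (SP Qd (Inr lk)) \<and> card (SP Qd (Inr lk)) \<le> bndf Mv (\<lambda>e. card (SP Q (Inr e)) ^ k) lk)"
proof -
  have finS: "finite (srcs P)" using valid by (simp add: valid_problem_def)
  obtain F where F: "dcode P (\<lambda>s. SP Q (Inl s)) F" "\<forall>e\<in>links P. LV P (\<lambda>s. SP Q (Inl s)) F e \<subseteq> SP Q (Inr e)"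
    using extract_dcode[OF valid nc dec] by blast
  define A where "A = (\<lambda>s. SP Q (Inl s))"
  have dcA: "dcode P A F" using F(1) by (simp add: A_def)
  have dc2: "dcode P (prodA k A) (prodF P k F)" by (rule prod_dcode[OF finS dcA])
  have M2: "1 \<le> Mv s \<and> Mv s \<le> card (prodA k A s)" if "s \<in> srcs P" for s
    using Mv[OF that] card_prodA[OF finS dcA that, of k] by (simp add: A_def)
  obtain Qd where Qd: "network_code (Pdag P) Qd"
     "\<forall>s\<in>srcs (Pdag P). \<forall>u\<in>dest (Pdag P) s. jent Qd ({Inl s} \<union> in_node (Pdag P) u) - jent Qd (in_node (Pdag P) u) = 0"
     "\<forall>x. card (SP Qd (Inl x)) = (\<Prod>s\<in>srcs P. Mv s)"
     "\<forall>lk\<in>links (Pdag P). 1 \<le> card (SP Qd (Inr lk)) \<and> card (SP Qd (Inr lk)) \<le> bndf Mv (\<lambda>e. card (LV P (prodA k A) (prodF P k F) e)) lk"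
    using dag_code[OF valid dc2 M2] by blast
  have bnd: "bndf Mv (\<lambda>e. card (LV P (prodA k A) (prodF P k F) e)) lk \<le> bndf Mv (\<lambda>e. card (SP Q (Inr e)) ^ k) lk"
    if "lk \<in> links (Pdag P)" for lk
  proof (cases lk)
    case (OldL e)
    then have e: "e \<in> links P" using that by simp
    have finSP: "finite (SP Q (Inr e))" using nc e by (simp add: network_code_def idx_def)
    have "card (LV P (prodA k A) (prodF P k F) e) \<le> card (LV P A F e) ^ k" by (rule card_LV_prod[OF finS dcA])
    also have "... \<le> card (SP Q (Inr e)) ^ k"
      using F(2) e finSP by (intro power_mono card_mono) (auto simp: A_def)
    finally show ?thesis using OldL by simp
  qed auto
  show ?thesis using Qd bnd by (intro exI[of _ Qd]) (auto intro: order_trans)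
qed

lemma part2:
  fixes P :: "('v, 'e, 's) problem" and l :: "'s \<Rightarrow> real" and w :: "'e \<Rightarrow> real"
  assumes valid: "valid_problem P" and rt: "rate_capacity_tuple P (l, w)"
    and za: "zero_achievable P (l, w)"
  shows "zero_achievable (Pdag P) (Tdag P (l, w))"
proof -
  define S where "S = srcs P"
  have finS: "finite S" using valid by (simp add: valid_problem_def S_def)
  have lnn: "\<And>s. s \<in> S \<Longrightarrow> 0 \<le> l s" using rt by (simp add: rate_capacity_tuple_def S_def)
  obtain Q :: "nat \<Rightarrow> ('s + 'e \<Rightarrow> nat) pmf" and c :: "nat \<Rightarrow> real" where
    Q: "\<And>n. network_code P (Q n)" and cpos: "\<And>n. c n > 0"
    and srcL: "\<forall>s\<in>srcs P. \<exists>L. (\<lambda>n. c n * log 2 (real (card (SP (Q n) (Inl s))))) \<longlonglongrightarrow> L \<and> L \<ge> l s"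
    and lnkL: "\<forall>e\<in>links P. \<exists>L. (\<lambda>n. c n * log 2 (real (card (SP (Q n) (Inr e))))) \<longlonglongrightarrow> L \<and> L \<le> w e"
    and dec: "\<And>n. \<forall>s\<in>srcs P. \<forall>u\<in>dest P s. jent (Q n) ({Inl s} \<union> in_node P u) - jent (Q n) (in_node P u) = 0"
    using za unfolding zero_achievable_def by auto
  define Ks where "Ks s n = card (SP (Q n) (Inl s))" for s n
  define Ke where "Ke e n = card (SP (Q n) (Inr e))" for e n
  have Ks1: "Ks s n \<ge> 1" if "s \<in> S" for s n
  proof -
    have "finite (SP (Q n) (Inl s))" using Q[of n] that by (simp add: network_code_def idx_def S_def)
    moreover have "SP (Q n) (Inl s) \<noteq> {}" by (simp add: SP_def set_pmf_not_empty)
    ultimately show ?thesis by (simp add: Ks_def Suc_le_eq card_gt_0_iff)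
  qed
  have Ke1: "Ke e n \<ge> 1" if "e \<in> links P" for e n
  proof -
    have "finite (SP (Q n) (Inr e))" using Q[of n] that by (simp add: network_code_def idx_def)
    moreover have "SP (Q n) (Inr e) \<noteq> {}" by (simp add: SP_def set_pmf_not_empty)
    ultimately show ?thesis by (simp add: Ke_def Suc_le_eq card_gt_0_iff)
  qed
  obtain Ls where Ls: "\<And>s. s \<in> S \<Longrightarrow> (\<lambda>n. c n * log 2 (real (Ks s n))) \<longlonglongrightarrow> Ls s \<and> Ls s \<ge> l s"
    using bchoice[OF srcL] by (auto simp: Ks_def S_def)
  obtain Le where Le: "\<And>e. e \<in> links P \<Longrightarrow> (\<lambda>n. c n * log 2 (real (Ke e n))) \<longlonglongrightarrow> Le e \<and> Le e \<le> w e"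
    using bchoice[OF lnkL] by (auto simp: Ke_def)
  define k where "k n = nat \<lceil>c n * real (Suc n)\<rceil> + 1" for n
  have k1: "k n \<ge> 1" for n by (simp add: k_def)
  have kpos: "real (k n) > 0" for n using k1[of n] by simp
  have kge: "c n * real (Suc n) \<le> real (k n)" for n
  proof -
    have "c n * real (Suc n) \<le> of_int \<lceil>c n * real (Suc n)\<rceil>" by (rule le_of_int_ceiling)
    also have "... \<le> real (nat \<lceil>c n * real (Suc n)\<rceil>)" by simp
    finally show ?thesis by (simp add: k_def)
  qed
  define c' where "c' n = c n / real (k n)" for n
  have c'pos: "c' n > 0" for n using cpos[of n] kpos[of n] by (simp add: c'_def)
  have c'le: "c' n \<le> 1 / real (Suc n)" for n
  proof -
    have "c n \<le> real (k n) / real (Suc n)" using kge[of n] by (simp add: field_simps)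
    then show ?thesis using kpos[of n] by (simp add: c'_def field_simps)
  qed
  define t where "t s n = min (l s) (c n * log 2 (real (Ks s n)))" for s n
  have logKs: "log 2 (real (Ks s n)) \<ge> 0" if "s \<in> S" for s n using Ks1[OF that, of n] by simp
  have tnn: "t s n \<ge> 0" if "s \<in> S" for s n
    using lnn[OF that] logKs[OF that, of n] cpos[of n] by (simp add: t_def)
  define a where "a s n = real (k n) * t s n / c n" for s n
  have ann: "a s n \<ge> 0" if "s \<in> S" for s n using tnn[OF that, of n] cpos[of n] by (simp add: a_def)
  define Mv where "Mv n s = nat \<lfloor>2 powr (a s n)\<rfloor>" for n s
  have Mv1: "1 \<le> Mv n s" if "s \<in> S" for n s unfolding Mv_def by (rule floor_pow_bounds(1)[OF ann[OF that]])
  have logMv_up: "log 2 (real (Mv n s)) \<le> a s n" if "s \<in> S" for n s unfolding Mv_def by (rule floor_pow_bounds(2)[OF ann[OF that]])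
  have logMv_lo: "a s n - 1 \<le> log 2 (real (Mv n s))" if "s \<in> S" for n s unfolding Mv_def by (rule floor_pow_bounds(3)[OF ann[OF that]])
  have Mvle: "Mv n s \<le> Ks s n ^ k n" if s: "s \<in> S" for n s
  proof -
    have "t s n \<le> c n * log 2 (real (Ks s n))" by (simp add: t_def)
    then have "a s n \<le> real (k n) * log 2 (real (Ks s n))"
      using cpos[of n] kpos[of n] by (simp add: a_def divide_le_eq mult.commute mult_left_mono)
    also have "... = log 2 (real (Ks s n ^ k n))" using Ks1[OF s, of n] by (simp add: log_nat_power)
    finally have "log 2 (real (Mv n s)) \<le> log 2 (real (Ks s n ^ k n))" using logMv_up[OF s, of n] by simp
    moreover have "real (Mv n s) > 0" using Mv1[OF s, of n] by simp
    moreover have "real (Ks s n ^ k n) > 0" using Ks1[OF s, of n] by simp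
    ultimately have "real (Mv n s) \<le> real (Ks s n ^ k n)" by simp
    then show ?thesis by linarith
  qed
  have "\<exists>Qd. network_code (Pdag P) Qd \<and>
     (\<forall>s\<in>srcs (Pdag P). \<forall>u\<in>dest (Pdag P) s. jent Qd ({Inl s} \<union> in_node (Pdag P) u) - jent Qd (in_node (Pdag P) u) = 0) \<and>
     (\<forall>x. card (SP Qd (Inl x)) = (\<Prod>s\<in>srcs P. Mv n s)) \<and>
     (\<forall>lk\<in>links (Pdag P). 1 \<le> card (SP Qd (Inr lk)) \<and> card (SP Qd (Inr lk)) \<le> bndf (Mv n) (\<lambda>e. Ke e n ^ k n) lk)" for n
  proof -
    have "\<And>s. s \<in> srcs P \<Longrightarrow> 1 \<le> Mv n s \<and> Mv n s \<le> card (SP (Q n) (Inl s)) ^ k n"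
      using Mv1 Mvle by (simp add: S_def Ks_def)
    from step_code[OF valid Q dec this] show ?thesis by (simp add: Ke_def)
  qed
  then obtain Qd where Qd: "\<And>n. network_code (Pdag P) (Qd n)"
     "\<And>n. \<forall>s\<in>srcs (Pdag P). \<forall>u\<in>dest (Pdag P) s. jent (Qd n) ({Inl s} \<union> in_node (Pdag P) u) - jent (Qd n) (in_node (Pdag P) u) = 0"
     "\<And>n x. card (SP (Qd n) (Inl x)) = (\<Prod>s\<in>srcs P. Mv n s)"
     "\<And>n lk. lk \<in> links (Pdag P) \<Longrightarrow> 1 \<le> card (SP (Qd n) (Inr lk)) \<and> card (SP (Qd n) (Inr lk)) \<le> bndf (Mv n) (\<lambda>e. Ke e n ^ k n) lk"
    using choice[OF allI, of "\<lambda>n Qd. network_code (Pdag P) Qd \<and>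
     (\<forall>s\<in>srcs (Pdag P). \<forall>u\<in>dest (Pdag P) s. jent Qd ({Inl s} \<union> in_node (Pdag P) u) - jent Qd (in_node (Pdag P) u) = 0) \<and>
     (\<forall>x. card (SP Qd (Inl x)) = (\<Prod>s\<in>srcs P. Mv n s)) \<and>
     (\<forall>lk\<in>links (Pdag P). 1 \<le> card (SP Qd (Inr lk)) \<and> card (SP Qd (Inr lk)) \<le> bndf (Mv n) (\<lambda>e. Ke e n ^ k n) lk)"]
    by blast
  define rM where "rM s n = c' n * log 2 (real (Mv n s))" for s n
  have rM_up: "rM s n \<le> t s n" if "s \<in> S" for s n
  proof -
    have "rM s n \<le> c' n * a s n" unfolding rM_def using logMv_up[OF that, of n] c'pos[of n] by (intro mult_left_mono) auto
    also have "c' n * a s n = t s n" using cpos[of n] kpos[of n] by (simp add: c'_def a_def)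
    finally show ?thesis .
  qed
  have rM_lo: "t s n - 1 / real (Suc n) \<le> rM s n" if "s \<in> S" for s n
  proof -
    have "c' n * (a s n - 1) \<le> rM s n" unfolding rM_def using logMv_lo[OF that, of n] c'pos[of n] by (intro mult_left_mono) auto
    moreover have "c' n * (a s n - 1) = t s n - c' n" using cpos[of n] kpos[of n] by (simp add: c'_def a_def right_diff_distrib)
    ultimately show ?thesis using c'le[of n] by linarith
  qed
  have tlim: "(\<lambda>n. t s n) \<longlonglongrightarrow> l s" if "s \<in> S" for s
  proof -
    have "(\<lambda>n. min (l s) (c n * log 2 (real (Ks s n)))) \<longlonglongrightarrow> min (l s) (Ls s)"
      using Ls[OF that] by (intro tendsto_min tendsto_const) auto
    moreover have "min (l s) (Ls s) = l s" using Ls[OF that] by simp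
    ultimately show ?thesis by (simp add: t_def)
  qed
  have rMlim: "(\<lambda>n. rM s n) \<longlonglongrightarrow> l s" if s: "s \<in> S" for s
  proof (rule tendsto_sandwich[where f = "\<lambda>n. t s n - 1 / real (Suc n)" and h = "\<lambda>n. t s n"])
    show "\<forall>\<^sub>F n in sequentially. t s n - 1 / real (Suc n) \<le> rM s n" using rM_lo[OF s] by simp
    show "\<forall>\<^sub>F n in sequentially. rM s n \<le> t s n" using rM_up[OF s] by simp
    show "(\<lambda>n. t s n) \<longlonglongrightarrow> l s" by (rule tlim[OF s])
    have "(\<lambda>n. 1 / real (Suc n)) \<longlonglongrightarrow> 0" using LIMSEQ_inverse_real_of_nat by (simp add: inverse_eq_divide)
    then have "(\<lambda>n. t s n - 1 / real (Suc n)) \<longlonglongrightarrow> l s - 0" by (intro tendsto_diff tlim[OF s])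
    then show "(\<lambda>n. t s n - 1 / real (Suc n)) \<longlonglongrightarrow> l s" by simp
  qed
  have srcrate: "(\<lambda>n. c' n * log 2 (real (card (SP (Qd n) (Inl x))))) \<longlonglongrightarrow> (\<Sum>s\<in>S. l s)" for x
  proof -
    have eq: "c' n * log 2 (real (card (SP (Qd n) (Inl x)))) = (\<Sum>s\<in>S. rM s n)" for n
    proof -
      have "real (card (SP (Qd n) (Inl x))) = (\<Prod>s\<in>S. real (Mv n s))" by (simp add: Qd(3) S_def)
      moreover have "log 2 (\<Prod>s\<in>S. real (Mv n s)) = (\<Sum>s\<in>S. log 2 (real (Mv n s)))"
      proof (rule log_prod_pos[OF finS])
        fix s assume "s \<in> S" then show "0 < real (Mv n s)" using Mv1[of s n] by simp
      qed
      ultimately show ?thesis by (simp add: rM_def sum_distrib_left)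
    qed
    have "(\<lambda>n. \<Sum>s\<in>S. rM s n) \<longlonglongrightarrow> (\<Sum>s\<in>S. l s)" by (intro tendsto_sum rMlim)
    then show ?thesis by (simp add: eq)
  qed
  define y where "y lk n = c' n * log 2 (real (card (SP (Qd n) (Inr lk))))" for lk n
  define U where "U lk n = (case lk of OldL e \<Rightarrow> c n * log 2 (real (Ke e n)) | La s \<Rightarrow> rM s n | Lb s \<Rightarrow> rM s n
     | Lc s \<Rightarrow> rM s n | Ld s u \<Rightarrow> rM s n)" for lk :: "('v, 's, 'e) dlink" and n
  define UL where "UL lk = (case lk of OldL e \<Rightarrow> Le e | La s \<Rightarrow> l s | Lb s \<Rightarrow> l s
     | Lc s \<Rightarrow> l s | Ld s u \<Rightarrow> l s)" for lk :: "('v, 's, 'e) dlink"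
  have ynn: "0 \<le> y lk n" if "lk \<in> links (Pdag P)" for lk n
    using Qd(4)[OF that, of n] c'pos[of n] by (simp add: y_def)
  have yU: "y lk n \<le> U lk n" if lk: "lk \<in> links (Pdag P)" for lk n
  proof -
    have c1: "1 \<le> card (SP (Qd n) (Inr lk))" and c2: "card (SP (Qd n) (Inr lk)) \<le> bndf (Mv n) (\<lambda>e. Ke e n ^ k n) lk"
      using Qd(4)[OF lk, of n] by auto
    have "log 2 (real (card (SP (Qd n) (Inr lk)))) \<le> log 2 (real (bndf (Mv n) (\<lambda>e. Ke e n ^ k n) lk))"
      using c1 c2 by (intro log_mono) auto
    then have "y lk n \<le> c' n * log 2 (real (bndf (Mv n) (\<lambda>e. Ke e n ^ k n) lk))"
      unfolding y_def using c'pos[of n] by (intro mult_left_mono) auto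
    also have "... = U lk n"
    proof (cases lk)
      case (OldL e)
      then have e: "e \<in> links P" using lk by simp
      have "c' n * log 2 (real (Ke e n ^ k n)) = c' n * (real (k n) * log 2 (real (Ke e n)))"
        using Ke1[OF e, of n] by (simp add: log_nat_power)
      also have "... = c n * log 2 (real (Ke e n))" using kpos[of n] by (simp add: c'_def)
      finally show ?thesis using OldL by (simp add: U_def)
    qed (simp_all add: U_def rM_def)
    finally show ?thesis .
  qed
  have Ulim: "(\<lambda>n. U lk n) \<longlonglongrightarrow> UL lk" and ULcap: "UL lk \<le> Tdag_cap l w lk"
    if lk: "lk \<in> links (Pdag P)" for lk
  proof -
    have "(\<lambda>n. U lk n) \<longlonglongrightarrow> UL lk \<and> UL lk \<le> Tdag_cap l w lk"
    proof (cases lk)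
      case (OldL e)
      then have "e \<in> links P" using lk by simp
      then show ?thesis using Le OldL by (simp add: U_def UL_def)
    next
      case (La s) then have "s \<in> S" using lk by (simp add: S_def)
      then show ?thesis using rMlim La by (simp add: U_def UL_def)
    next
      case (Lb s) then have "s \<in> S" using lk by (simp add: S_def)
      then show ?thesis using rMlim Lb by (simp add: U_def UL_def)
    next
      case (Lc s) then have "s \<in> S" using lk by (simp add: S_def)
      then show ?thesis using rMlim Lc by (simp add: U_def UL_def)
    next
      case (Ld s u) then have "s \<in> S" using lk by (simp add: S_def)
      then show ?thesis using rMlim Ld by (simp add: U_def UL_def)
    qed
    then show "(\<lambda>n. U lk n) \<longlonglongrightarrow> UL lk" "UL lk \<le> Tdag_cap l w lk" by auto
  qed
  have "\<exists>B. \<forall>n. \<bar>y lk n\<bar> \<le> B" if lk: "lk \<in> links (Pdag P)" for lk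
  proof -
    have "Bseq (\<lambda>n. U lk n)" by (rule convergent_imp_Bseq[OF convergentI[OF Ulim[OF lk]]])
    then obtain B where B: "\<And>n. norm (U lk n) \<le> B" by (auto simp: Bseq_def)
    have "\<bar>y lk n\<bar> \<le> B" for n using ynn[OF lk, of n] yU[OF lk, of n] B[of n] by simp
    then show ?thesis by blast
  qed
  then obtain B where B: "\<And>lk n. lk \<in> links (Pdag P) \<Longrightarrow> \<bar>y lk n\<bar> \<le> B lk" by metis
  obtain r where r: "strict_mono r" "\<And>lk. lk \<in> links (Pdag P) \<Longrightarrow> convergent (\<lambda>n. (\<lambda>n lk. y lk n) (r n) lk)"
    using subseq_conv_finite[of "links (Pdag P)" "\<lambda>n lk. y lk n" B] finite_links_Pdag[OF valid] B by blast
  show ?thesis unfolding zero_achievable_def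
  proof (intro exI[of _ "\<lambda>n. Qd (r n)"] exI[of _ "\<lambda>n. c' (r n)"] conjI allI ballI)
    fix n show "network_code (Pdag P) (Qd (r n))" by (rule Qd(1))
    show "0 < c' (r n)" by (rule c'pos)
  next
    fix x assume "x \<in> srcs (Pdag P)"
    have "(\<lambda>n. c' (r n) * log 2 (real (card (SP (Qd (r n)) (Inl x))))) \<longlonglongrightarrow> (\<Sum>s\<in>S. l s)"
      using LIMSEQ_subseq_LIMSEQ[OF srcrate r(1)] by (simp add: o_def)
    then show "\<exists>L. (\<lambda>n. c' (r n) * log 2 (real (card (SP (Qd (r n)) (Inl x))))) \<longlonglongrightarrow> L \<and> fst (Tdag P (l, w)) x \<le> L"
      by (auto simp: Tdag_def S_def)
  next
    fix lk assume lk: "lk \<in> links (Pdag P)"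
    obtain L where L: "(\<lambda>n. y lk (r n)) \<longlonglongrightarrow> L" using r(2)[OF lk] by (auto simp: convergent_def)
    have "(\<lambda>n. U lk (r n)) \<longlonglongrightarrow> UL lk" using LIMSEQ_subseq_LIMSEQ[OF Ulim[OF lk] r(1)] by (simp add: o_def)
    then have "L \<le> UL lk" using L yU[OF lk] by (intro LIMSEQ_le[OF L]) auto
    then have "L \<le> snd (Tdag P (l, w)) lk" using ULcap[OF lk] by (simp add: Tdag_def)
    then show "\<exists>L. (\<lambda>n. c' (r n) * log 2 (real (card (SP (Qd (r n)) (Inr lk))))) \<longlonglongrightarrow> L \<and> L \<le> snd (Tdag P (l, w)) lk"
      using L by (auto simp: y_def)
  next
    fix n x u assume "x \<in> srcs (Pdag P)" "u \<in> dest (Pdag P) x"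
    then show "jent (Qd (r n)) ({Inl x} \<union> in_node (Pdag P) u) - jent (Qd (r n)) (in_node (Pdag P) u) = 0"
      using Qd(2)[of "r n"] by blast
  qed
qed

theorem theorem10:
  fixes P :: "('v, 'e, 's) problem"
    and l :: "'s \<Rightarrow> real" and w :: "'e \<Rightarrow> real"
  assumes "valid_problem P"
    and "rate_capacity_tuple P (l, w)"
  shows "(Tdag P (l, w) \<in> outer_bound (Pdag P) \<longrightarrow> (l, w) \<in> outer_bound P)
       \<and> (zero_achievable P (l, w) \<longrightarrow> zero_achievable (Pdag P) (Tdag P (l, w)))"
  using part1[OF assms] part2[OF assms] by blast

end
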